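(* Let $A$ be a Noetherian integral domain with fraction field $K$, $M$ a finitely generated torsion-free $A$-module, $V=K\otimes_A M$ with $\dim_K V=n\ge 2$. Let $E(M\setminus\{0\})$ be the simplicial complex of all nonempty finite subsets of $M\setminus\{0\}$ and $E^*(M)$ its subcomplex of subsets of rank $<n$. Let $C_p(E(M\setminus\{0\}))$ be the free abelian group on ordered tuples $(v_0,\dots,v_p)$ of elements of $M\setminus\{0\}$ (ordered simplicial chains, with the usual alternating-sum boundary), $C_p(E^*(M))$ the subcomplex spanned by tuples of rank $<n$, and $\bar C_*=C_*(E(M\setminus\{0\}))/C_*(E^*(M))$. Then $\bar C_p=0$ for $p<n-1$, so every element of $\bar C_{n-1}$ is a cycle; composing the resulting map $\bar C_{n-1}\to H_{n-1}(\bar C_* )$ with the connecting homomorphism $H_{n-1}(\bar C_* )\to H_{n-2}(E^*(M))$, the inverse of the canonical subdivision isomorphism $H_{n-2}(\operatorname{sd}E^*(M))\xrightarrow{\sim}H_{n-2}(E^*(M))$, and the map $H_{n-2}(\operatorname{sd}E^*(M))\to H_{n-2}(T(V))=\operatorname{St}(V)$ induced by the simplicial map $\operatorname{sd}E^*(M)\to T(V)$ sending a vertex $Y$ of $\operatorname{sd}E^*(M)$ (a simplex of $E^*(M)$) to the $K$-span of $Y$, one obtains a homomorphism $\operatorname{ar}:\bar C_{n-1}\to \operatorname{St}(V)$ (with image in $\widetilde{\operatorname{St}}(V)$). Then for every $n$-tuple $Q=(v_0,\dots,v_{n-1})$ of elements of $M\setminus\{0\}$ spanning $V$, $\operatorname{ar}(Q)$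 equals the universal modular symbol $[v_0,\dots,v_{n-1}]$.
   Context: The rank of a subset of $M$ is the $K$-dimension of its span in $V$. $T(V)$ is the Tits building of $V$: vertices are nonzero proper subspaces of $V$, simplices are flags (nonempty chains under inclusion) of such subspaces; $\operatorname{St}(V)=H_{n-2}(T(V))$ is the Steinberg module, and $\widetilde{\operatorname{St}}(V)=\operatorname{St}(V)$ if $n>2$, while for $n=2$ it is the kernel of the augmentation $\operatorname{St}(V)=\mathbf{Z}[\text{lines of }V]\to\mathbf{Z}$ sending each line to $1$. For a simplicial complex $\Gamma$, $\operatorname{sd}\Gamma$ is its barycentric subdivision: vertices are the simplices of $\Gamma$, simplices are nonempty chains of simplices under inclusion; the subdivision isomorphism $H_*(\operatorname{sd}\Gamma)\cong H_*(\Gamma)$ is the canonical one, natural in $\Gamma$. Universal modular symbol: let $\Sigma_n$ be the simplicial complex whose vertices are the nonempty proper subsets of $\{0,\dots,n-1\}$ and whose simplices are chains of such subsets (the boundary of the barycentric subdivision of the simplex on $\{0,\dots,n-1\}$). Let $\zeta\in H_{n-2}(\Sigma_n)$ be the fundamental class given by the canonical orientation: the image under the connecting map of the class in $H_{n-1}$ of the subdivided simplex relative to its boundary corresponding to the oriented simplex $(0,1,\dots,n-1)$; for $n=2$ this is $\zeta=[\{1\}]-[\{0\}]$. For nonzero $v_0,\dots,v_{n-1}\in V$, let $\phi_Q:\Sigma_n\to T(V)$ send a vertex $I$ to the span of $\{v_i:i\in I\}$ (a simplicial map when the $v_i$ span $V$), and $[v_0,\dots,v_{n-1}]:=(\phi_Q)_*\zeta\in\operatorname{St}(V)$.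 *)

theory Defs
  imports Complex_Main "HOL-Computational_Algebra.Fraction_Field"
begin

definition is_ideal :: "'a::comm_ring_1 set \<Rightarrow> bool" where
  "is_ideal I \<longleftrightarrow> 0 \<in> I \<and> (\<forall>x\<in>I. \<forall>y\<in>I. x + y \<in> I) \<and> (\<forall>r. \<forall>x\<in>I. r * x \<in> I)"

definition noetherian_ring :: "'a::comm_ring_1 itself \<Rightarrow> bool" where
  "noetherian_ring _ \<longleftrightarrow> (\<forall>I::'a set. is_ideal I \<longrightarrow>
     (\<exists>G. finite G \<and> G \<subseteq> I \<and> I = {\<Sum>g\<in>G. c g * g | c. True}))"

text \<open>A finitely generated A-submodule M of a K-vector space (K = Frac A, scalars of A
  acting through the embedding a \<mapsto> Fract a 1).\<close>
definition fg_A_submodule :: "('a::idom fract \<Rightarrow> 'v::ab_group_add \<Rightarrow> 'v) \<Rightarrow> 'v set \<Rightarrow> bool" where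
  "fg_A_submodule scale M \<longleftrightarrow>
     0 \<in> M \<and> (\<forall>x\<in>M. \<forall>y\<in>M. x + y \<in> M) \<and> (\<forall>a. \<forall>x\<in>M. scale (Fract a 1) x \<in> M) \<and>
     (\<exists>G. finite G \<and> G \<subseteq> M \<and> M = {\<Sum>g\<in>G. scale (Fract (c g) 1) g | c. True})"

text \<open>A simplicial complex is given by its set of simplices (nonempty finite vertex sets).
  Ordered p-chains: finitely supported integer functions on (p+1)-tuples (lists) whose
  underlying vertex set is a simplex.\<close>

type_synonym 'w chain = "'w list \<Rightarrow> int"

definition supp :: "'w chain \<Rightarrow> 'w list set" where
  "supp c = {s. c s \<noteq> 0}"

definition chains :: "'w set set \<Rightarrow> nat \<Rightarrow> 'w chain set" where
  "chains X p = {c. finite (supp c) \<and> (\<forall>s\<in>supp c. length s = Suc p \<and> set s \<in> X)}"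

definition del :: "nat \<Rightarrow> 'w list \<Rightarrow> 'w list" where
  "del i s = take i s @ drop (Suc i) s"

text \<open>Alternating-sum boundary (unaugmented: the boundary of a 0-chain is 0).\<close>
definition bd :: "'w chain \<Rightarrow> 'w chain" where
  "bd c = (\<lambda>t. if t = [] then 0 else
      (\<Sum>s\<in>supp c. \<Sum>i<length s. if del i s = t then (-1) ^ i * c s else 0))"

definition cycles :: "'w set set \<Rightarrow> nat \<Rightarrow> 'w chain set" where
  "cycles X p = {c \<in> chains X p. bd c = (\<lambda>_. 0)}"

definition bdries :: "'w set set \<Rightarrow> nat \<Rightarrow> 'w chain set" where
  "bdries X p = bd ` chains X (Suc p)"

text \<open>Homology class of a p-cycle, as a coset of the boundaries; H_p(X) is the set of classes.\<close>
definition hcls :: "'w set set \<Rightarrow> nat \<Rightarrow> 'w chain \<Rightarrow> 'w chain set" where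
  "hcls X p z = {(\<lambda>s. z s + b s) | b. b \<in> bdries X p}"

definition homology :: "'w set set \<Rightarrow> nat \<Rightarrow> 'w chain set set" where
  "homology X p = hcls X p ` cycles X p"

definition chain_map :: "('w \<Rightarrow> 'u) \<Rightarrow> 'w chain \<Rightarrow> 'u chain" where
  "chain_map f c = (\<lambda>t. \<Sum>s\<in>{s \<in> supp c. map f s = t}. c s)"

definition hmap :: "'u set set \<Rightarrow> nat \<Rightarrow> ('w \<Rightarrow> 'u) \<Rightarrow> 'w chain set \<Rightarrow> 'u chain set" where
  "hmap Y p f h = hcls Y p (chain_map f (SOME z. z \<in> h))"

text \<open>Relative chains: for a subcomplex X0 of X, the class of a p-chain x of X in
  H_p(C(X)/C(X0)), represented as the set x + C_p(X0) + bd C_(p+1)(X).\<close>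
definition rel_cls :: "'w set set \<Rightarrow> 'w set set \<Rightarrow> nat \<Rightarrow> 'w chain \<Rightarrow> 'w chain set" where
  "rel_cls X X0 p x = {(\<lambda>s. x s + a s + bd b s) | a b. a \<in> chains X0 p \<and> b \<in> chains X (Suc p)}"

text \<open>Connecting homomorphism H_(p+1)(C(X)/C(X0)) \<rightarrow> H_p(X0): lift and take the boundary.\<close>
definition conn :: "'w set set \<Rightarrow> nat \<Rightarrow> 'w chain set \<Rightarrow> 'w chain set" where
  "conn X0 p h = hcls X0 p (bd (SOME x. x \<in> h))"

definition sd :: "'w set set \<Rightarrow> 'w set set set" where
  "sd X = {S. S \<noteq> {} \<and> finite S \<and> S \<subseteq> X \<and> (\<forall>A\<in>S. \<forall>B\<in>S. A \<subseteq> B \<or> B \<subseteq> A)}"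

text \<open>The canonical isomorphism H_*(sd X) \<cong> H_*(X) is induced by any simplicial
  approximation of the identity, i.e. a vertex map sending a simplex Y to a vertex of Y.\<close>
definition sd_approx :: "'w set \<Rightarrow> 'w" where
  "sd_approx Y = (SOME y. y \<in> Y)"

text \<open>Canonical subdivision chain of an ordered simplex (cone construction
  sd(s) = [set s] * sd(bd s)).\<close>
primrec sdc :: "nat \<Rightarrow> 'w list \<Rightarrow> 'w set chain" where
  "sdc 0 s = (\<lambda>t. if t = [set s] then 1 else 0)"
| "sdc (Suc k) s = (\<lambda>t. case t of [] \<Rightarrow> 0
     | Y # t' \<Rightarrow> if Y = set s then (\<Sum>i<length s. (-1) ^ i * sdc k (del i s) t') else 0)"

definition sd_chain :: "'w list \<Rightarrow> 'w set chain" where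
  "sd_chain s = sdc (length s - 1) s"

definition tits :: "('k::field \<Rightarrow> 'v::ab_group_add \<Rightarrow> 'v) \<Rightarrow> 'v set set set" where
  "tits scale = {F. F \<noteq> {} \<and> finite F \<and>
     (\<forall>W\<in>F. module.subspace scale W \<and> W \<noteq> {0} \<and> W \<noteq> UNIV) \<and>
     (\<forall>W1\<in>F. \<forall>W2\<in>F. W1 \<subseteq> W2 \<or> W2 \<subseteq> W1)}"

definition cplxE :: "'v::zero set \<Rightarrow> 'v set set" where
  "cplxE M = {S. S \<noteq> {} \<and> finite S \<and> S \<subseteq> M - {0}}"

definition cplxEstar :: "('k::field \<Rightarrow> 'v::ab_group_add \<Rightarrow> 'v) \<Rightarrow> 'v set \<Rightarrow> nat \<Rightarrow> 'v set set" where
  "cplxEstar scale M n = {S \<in> cplxE M. vector_space.dim scale S < n}"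

definition tuple_chain :: "'w list \<Rightarrow> 'w chain" where
  "tuple_chain s = (\<lambda>t. if t = s then 1 else 0)"

text \<open>The map ar on the element Q of C-bar_(n-1):
  St(V) <- H_(n-2)(sd E*) <-(canonical iso)^-1- H_(n-2)(E*) <-conn- H_(n-1)(C-bar).\<close>
definition ar :: "('k::field \<Rightarrow> 'v::ab_group_add \<Rightarrow> 'v) \<Rightarrow> 'v set \<Rightarrow> nat \<Rightarrow> 'v list \<Rightarrow> 'v set chain set" where
  "ar scale M n Q =
     hmap (tits scale) (n - 2) (module.span scale)
       (THE c. c \<in> homology (sd (cplxEstar scale M n)) (n - 2) \<and>
          hmap (cplxEstar scale M n) (n - 2) sd_approx c =
          conn (cplxEstar scale M n) (n - 2)
            (rel_cls (cplxE M) (cplxEstar scale M n) (n - 1) (tuple_chain Q)))"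

definition Sigma_cplx :: "nat \<Rightarrow> nat set set set" where
  "Sigma_cplx n = {S. S \<noteq> {} \<and> finite S \<and> (\<forall>I\<in>S. I \<noteq> {} \<and> I \<subset> {0..<n}) \<and>
     (\<forall>I\<in>S. \<forall>J\<in>S. I \<subseteq> J \<or> J \<subseteq> I)}"

text \<open>Fundamental class: connecting image of the class of the subdivided oriented simplex
  (0,...,n-1) relative to its boundary.\<close>
definition zeta :: "nat \<Rightarrow> nat set chain set" where
  "zeta n = hcls (Sigma_cplx n) (n - 2) (bd (sd_chain [0..<n]))"

definition modsym :: "('k::field \<Rightarrow> 'v::ab_group_add \<Rightarrow> 'v) \<Rightarrow> 'v list \<Rightarrow> 'v set chain set" where
  "modsym scale vs = hmap (tits scale) (length vs - 2)
      (\<lambda>I. module.span scale ((\<lambda>i. vs ! i) ` I)) (zeta (length vs))"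

end

theory Submission
  imports Defs "HOL-Library.Function_Algebras"
begin

abbreviation fin :: "'w chain \<Rightarrow> bool" where "fin c \<equiv> finite (supp c)"

lemma sum_app: "(sum f I) x = sum (\<lambda>i. f i x) I"
  by (induct I rule: infinite_finite_induct) auto

lemma supp_add: "supp (a + b) \<subseteq> supp a \<union> supp b"
  by (auto simp: supp_def)
lemma supp_uminus[simp]: "supp (- a) = supp a"
  by (auto simp: supp_def)
lemma supp_diff: "supp (a - b) \<subseteq> supp a \<union> supp b"
  by (auto simp: supp_def)
lemma supp_zero[simp]: "supp 0 = {}"
  by (auto simp: supp_def)
lemma supp_zero'[simp]: "supp (\<lambda>_. 0) = {}"
  by (auto simp: supp_def)
lemma supp_scal: "supp (\<lambda>t. k * c t) \<subseteq> supp c"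
  by (auto simp: supp_def)
lemma supp_sum: "supp (sum f I) \<subseteq> (\<Union>i\<in>I. supp (f i))"
  by (auto simp: supp_def sum_app intro: ccontr elim!: sum.not_neutral_contains_not_neutral)

lemma fin_add[intro]: "fin a \<Longrightarrow> fin b \<Longrightarrow> fin (a + b)"
  by (meson finite_Un finite_subset supp_add)
lemma fin_diff[intro]: "fin a \<Longrightarrow> fin b \<Longrightarrow> fin (a - b)"
  by (meson finite_Un finite_subset supp_diff)
lemma fin_scal[intro]: "fin c \<Longrightarrow> fin (\<lambda>t. k * c t)"
  by (rule finite_subset[OF supp_scal])
lemma fin_sum[intro]: "finite I \<Longrightarrow> (\<And>i. i \<in> I \<Longrightarrow> fin (f i)) \<Longrightarrow> fin (sum f I)"
  by (rule finite_subset[OF supp_sum]) auto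
lemma supp_tc: "supp (tuple_chain s) = {s}"
  by (auto simp: supp_def tuple_chain_def)
lemma fin_tc[simp]: "fin (tuple_chain s)"
  by (simp add: supp_tc)

definition lin :: "('w list \<Rightarrow> 'u chain) \<Rightarrow> 'w chain \<Rightarrow> 'u chain" where
  "lin f c = (\<lambda>t. \<Sum>s\<in>supp c. c s * f s t)"

lemma lin_superset: "finite U \<Longrightarrow> supp c \<subseteq> U \<Longrightarrow> lin f c = (\<lambda>t. \<Sum>s\<in>U. c s * f s t)"
  unfolding lin_def
  by (rule ext, rule sum.mono_neutral_left) (auto simp: supp_def)

lemma lin_add: "fin a \<Longrightarrow> fin b \<Longrightarrow> lin f (a + b) = lin f a + lin f b"
proof -
  assume a: "fin a" and b: "fin b"
  let ?U = "supp a \<union> supp b"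
  have "lin f (a + b) = (\<lambda>t. \<Sum>s\<in>?U. (a+b) s * f s t)"
    by (rule lin_superset) (use a b supp_add in auto)
  moreover have "lin f a = (\<lambda>t. \<Sum>s\<in>?U. a s * f s t)"
    by (rule lin_superset) (use a b in auto)
  moreover have "lin f b = (\<lambda>t. \<Sum>s\<in>?U. b s * f s t)"
    by (rule lin_superset) (use a b in auto)
  ultimately show ?thesis by (auto simp: algebra_simps sum.distrib)
qed

lemma lin_uminus: "lin f (- a) = - lin f a"
  by (auto simp: lin_def sum_negf)

lemma lin_diff: "fin a \<Longrightarrow> fin b \<Longrightarrow> lin f (a - b) = lin f a - lin f b"
  by (metis diff_conv_add_uminus fin_diff lin_add lin_uminus supp_uminus)

lemma lin_zero[simp]: "lin f 0 = 0"
  by (auto simp: lin_def)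
lemma lin_zero'[simp]: "lin f (\<lambda>_. 0) = 0"
  by (auto simp: lin_def)

lemma lin_scal: "fin c \<Longrightarrow> lin f (\<lambda>t. k * c t) = (\<lambda>t. k * lin f c t)"
proof -
  assume c: "fin c"
  have "lin f (\<lambda>t. k * c t) = (\<lambda>t. \<Sum>s\<in>supp c. (k * c s) * f s t)"
    by (rule lin_superset) (use c supp_scal in auto)
  then show ?thesis by (simp add: lin_def sum_distrib_left mult.assoc)
qed

lemma lin_tc[simp]: "lin f (tuple_chain s) = f s"
  unfolding lin_def supp_tc by (simp add: tuple_chain_def)

lemma lin_sum: "finite I \<Longrightarrow> (\<And>i. i \<in> I \<Longrightarrow> fin (c i)) \<Longrightarrow> lin f (sum c I) = (\<Sum>i\<in>I. lin f (c i))"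
proof (induct I rule: finite_induct)
  case empty then show ?case by simp
next
  case (insert x F)
  have "lin f (sum c (insert x F)) = lin f (c x + sum c F)" by (simp only: sum.insert[OF insert(1,2)])
  also have "\<dots> = lin f (c x) + lin f (sum c F)" using insert by (intro lin_add) auto
  also have "lin f (sum c F) = (\<Sum>i\<in>F. lin f (c i))" by (rule insert.hyps(3)) (use insert.prems in auto)
  finally show ?case by (simp only: sum.insert[OF insert(1,2)])
qed

lemma lin_fun_diff: "lin (\<lambda>s. f s - g s) c = lin f c - lin g c"
  by (auto simp: lin_def algebra_simps sum_subtractf)
lemma lin_fun_add: "lin (\<lambda>s. f s + g s) c = lin f c + lin g c"
  by (auto simp: lin_def algebra_simps sum.distrib)
lemma lin_fun_zero[simp]: "lin (\<lambda>s. 0) c = 0"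
  by (auto simp: lin_def)

lemma lin_cong: "(\<And>s. s \<in> supp c \<Longrightarrow> f s = g s) \<Longrightarrow> lin f c = lin g c"
  by (auto simp: lin_def)

lemma supp_lin: "supp (lin f c) \<subseteq> (\<Union>s\<in>supp c. supp (f s))"
  by (auto simp: lin_def supp_def intro: ccontr elim!: sum.not_neutral_contains_not_neutral)

lemma fin_lin[intro]: "fin c \<Longrightarrow> (\<And>s. s \<in> supp c \<Longrightarrow> fin (f s)) \<Longrightarrow> fin (lin f c)"
  by (rule finite_subset[OF supp_lin]) auto

lemma lin_comp:
  assumes c: "fin c" and f: "\<And>s. s \<in> supp c \<Longrightarrow> fin (f s)"
  shows "lin g (lin f c) = lin (\<lambda>s. lin g (f s)) c"
proof -
  define U where "U = (\<Union>s\<in>supp c. supp (f s))"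
  have U: "finite U" using c f by (auto simp: U_def)
  have "lin g (lin f c) = (\<lambda>t. \<Sum>u\<in>U. lin f c u * g u t)"
    by (rule lin_superset[OF U]) (simp add: U_def supp_lin)
  also have "\<dots> = (\<lambda>t. \<Sum>u\<in>U. (\<Sum>s\<in>supp c. c s * f s u) * g u t)"
    by (simp add: lin_def)
  also have "\<dots> = (\<lambda>t. \<Sum>s\<in>supp c. c s * (\<Sum>u\<in>U. f s u * g u t))"
    by (rule ext) (simp add: sum_distrib_left sum_distrib_right mult.assoc sum.swap[of _ U])
  also have "\<dots> = lin (\<lambda>s. lin g (f s)) c"
  proof -
    have *: "\<And>s. s \<in> supp c \<Longrightarrow> lin g (f s) = (\<lambda>t. \<Sum>u\<in>U. f s u * g u t)"
      by (rule lin_superset[OF U]) (auto simp: U_def)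
    show ?thesis unfolding lin_def[of "\<lambda>s. lin g (f s)"] 
      by (intro ext sum.cong) (simp_all add: *)
  qed
  finally show ?thesis .
qed

lemma lin_id: "fin c \<Longrightarrow> lin tuple_chain c = c"
proof (rule ext)
  fix x assume "fin c"
  have "lin tuple_chain c x = (\<Sum>s\<in>supp c. if x = s then c s else 0)"
    by (auto simp: lin_def tuple_chain_def intro!: sum.cong)
  also have "\<dots> = c x" using \<open>fin c\<close> by (auto simp: supp_def)
  finally show "lin tuple_chain c x = c x" .
qed

section \<open>Boundary\<close>

definition bdb :: "'w list \<Rightarrow> 'w chain" where
  "bdb s = (\<lambda>t. if t = [] then 0 else \<Sum>i<length s. if del i s = t then (-1) ^ i else 0)"

lemma bd_lin: "bd c = lin bdb c"
  unfolding bd_def lin_def bdb_def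
  by (rule ext) (auto simp: sum_distrib_left intro!: sum.cong)

lemma length_del: "i < length s \<Longrightarrow> length (del i s) = length s - 1"
  by (auto simp: del_def)

lemma set_del: "set (del i s) \<subseteq> set s"
  by (auto simp: del_def dest: in_set_takeD in_set_dropD)

lemma del_map: "del i (map f s) = map f (del i s)"
  by (simp add: del_def take_map drop_map)

lemma del_Cons0[simp]: "del 0 (x # s) = s"
  by (simp add: del_def)
lemma del_ConsSuc[simp]: "del (Suc i) (x # s) = x # del i s"
  by (simp add: del_def)
lemma del_Nil[simp]: "del i [] = []"
  by (simp add: del_def)

lemma del_del: "i \<le> j \<Longrightarrow> del j (del i s) = del i (del (Suc j) s)"
proof (induct s arbitrary: i j)
  case Nil then show ?case by simp
next
  case (Cons x s)
  show ?case
  proof (cases i)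
    case 0 then show ?thesis by simp
  next
    case (Suc i')
    then obtain j' where j: "j = Suc j'" using Cons.prems by (cases j) auto
    then show ?thesis using Suc Cons by simp
  qed
qed

lemma fin_bdb[intro, simp]: "fin (bdb s)"
proof -
  have "supp (bdb s) \<subseteq> (\<lambda>i. del i s) ` {..<length s}"
    by (auto simp: supp_def bdb_def intro: ccontr elim!: sum.not_neutral_contains_not_neutral split: if_splits)
  then show ?thesis by (rule finite_subset) auto
qed

lemma supp_bdb: "u \<in> supp (bdb s) \<Longrightarrow> \<exists>i<length s. u = del i s"
  by (auto simp: supp_def bdb_def elim!: sum.not_neutral_contains_not_neutral split: if_splits)

lemma bdb_sum: "2 \<le> length s \<Longrightarrow>
   bdb s = (\<Sum>i<length s. (\<lambda>t. (-1) ^ i * tuple_chain (del i s) t))"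
proof (rule ext)
  fix t assume s: "2 \<le> length s"
  have ne: "\<And>i. i < length s \<Longrightarrow> del i s \<noteq> []"
    using s length_del by fastforce
  have ne': "\<And>i. i < length s \<Longrightarrow> [] \<noteq> del i s" using ne by metis
  show "bdb s t = (\<Sum>i<length s. (\<lambda>t. (-1) ^ i * tuple_chain (del i s) t)) t"
    unfolding sum_app bdb_def tuple_chain_def using ne ne'
    by (auto intro!: sum.cong sum.neutral[symmetric])
qed

lemma bdb_short: "length s \<le> 1 \<Longrightarrow> bdb s = 0"
proof (rule ext)
  fix t assume "length s \<le> 1"
  then have "\<And>i. i < length s \<Longrightarrow> del i s = []" by (auto simp: del_def)
  then show "bdb s t = 0 t" by (auto simp: bdb_def intro!: sum.neutral)
qed

lemma alt_cancel:
  fixes h :: "'w list \<Rightarrow> int"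
  shows "(\<Sum>i<length s. (-1) ^ i * (\<Sum>j<length s - 1. (-1) ^ j * h (del j (del i s)))) = 0"
proof -
  define m where "m = length s"
  define F where "F = (\<lambda>(i::nat, j::nat). (-1) ^ (i + j) * h (del j (del i s)))"
  define A1 where "A1 = {(i,j). i < m \<and> j < m - 1 \<and> i \<le> j}"
  define A2 where "A2 = {(i,j). i < m \<and> j < m - 1 \<and> j < i}"
  have fA1: "finite A1" by (rule finite_subset[of _ "{..<m} \<times> {..<m-1}"]) (auto simp: A1_def)
  have fA2: "finite A2" by (rule finite_subset[of _ "{..<m} \<times> {..<m-1}"]) (auto simp: A2_def)
  have "(\<Sum>i<m. (-1) ^ i * (\<Sum>j<m - 1. (-1) ^ j * h (del j (del i s)))) = (\<Sum>p\<in>{..<m} \<times> {..<m-1}. F p)"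
    by (simp add: sum.cartesian_product[symmetric] sum_distrib_left F_def power_add mult.assoc)
  also have "{..<m} \<times> {..<m-1} = A1 \<union> A2" by (auto simp: A1_def A2_def)
  also have "sum F (A1 \<union> A2) = sum F A1 + sum F A2"
    by (rule sum.union_disjoint[OF fA1 fA2]) (auto simp: A1_def A2_def)
  also have "sum F A2 = sum (\<lambda>p. F ((\<lambda>(i,j). (Suc j, i)) p)) A1"
  proof (rule sum.reindex_bij_betw[symmetric])
    show "bij_betw (\<lambda>(i, j). (Suc j, i)) A1 A2"
      unfolding bij_betw_def
    proof
      show "inj_on (\<lambda>(i, j). (Suc j, i)) A1" by (auto simp: inj_on_def)
      show "(\<lambda>(i, j). (Suc j, i)) ` A1 = A2"
      proof
        show "(\<lambda>(i, j). (Suc j, i)) ` A1 \<subseteq> A2" by (auto simp: A1_def A2_def)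
        show "A2 \<subseteq> (\<lambda>(i, j). (Suc j, i)) ` A1"
        proof
          fix p assume "p \<in> A2"
          then obtain i j where p: "p = (i,j)" "i < m" "j < m - 1" "j < i" by (auto simp: A2_def)
          then have "(j, i - 1) \<in> A1" by (auto simp: A1_def)
          moreover have "p = (\<lambda>(i, j). (Suc j, i)) (j, i - 1)" using p by auto
          ultimately show "p \<in> (\<lambda>(i, j). (Suc j, i)) ` A1" by blast
        qed
      qed
    qed
  qed
  also have "sum (\<lambda>p. F ((\<lambda>(i,j). (Suc j, i)) p)) A1 = sum (\<lambda>p. - F p) A1"
  proof (rule sum.cong[OF refl])
    fix p assume "p \<in> A1"
    then obtain i j where p: "p = (i,j)" "i \<le> j" by (auto simp: A1_def)
    show "(\<lambda>p. F ((\<lambda>(i,j). (Suc j, i)) p)) p = - F p"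
      using p del_del[of i j s] by (simp add: F_def algebra_simps)
  qed
  finally show ?thesis by (simp add: m_def sum_negf)
qed

lemma bd_bdb[simp]: "bd (bdb s) = 0"
proof (cases "length s \<le> 2")
  case True
  show ?thesis
  proof (cases "length s \<le> 1")
    case True then show ?thesis by (simp add: bdb_short bd_lin)
  next
    case False
    then have s2: "length s = 2" using \<open>length s \<le> 2\<close> by auto
    have "bd (bdb s) = lin bdb (\<Sum>i<length s. (\<lambda>t. (-1) ^ i * tuple_chain (del i s) t))"
      unfolding bd_lin using s2 by (simp add: bdb_sum)
    also have "\<dots> = (\<Sum>i<length s. lin bdb (\<lambda>t. (-1) ^ i * tuple_chain (del i s) t))"
      by (rule lin_sum) auto
    also have "\<dots> = 0"
      by (rule sum.neutral) (auto simp: lin_scal length_del s2 bdb_short)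
    finally show ?thesis .
  qed
next
  case False
  then have s: "2 \<le> length s" by auto
  have "bd (bdb s) = lin bdb (\<Sum>i<length s. (\<lambda>t. (-1) ^ i * tuple_chain (del i s) t))"
    unfolding bd_lin using s by (simp add: bdb_sum)
  also have "\<dots> = (\<Sum>i<length s. lin bdb (\<lambda>t. (-1) ^ i * tuple_chain (del i s) t))"
    by (rule lin_sum) auto
  also have "\<dots> = (\<Sum>i<length s. (\<lambda>t. (-1) ^ i * bdb (del i s) t))"
    by (simp add: lin_scal)
  also have "\<dots> = (\<Sum>i<length s. (\<lambda>t. (-1) ^ i * (\<Sum>j<length s - 1. (\<lambda>t. (-1) ^ j * tuple_chain (del j (del i s)) t)) t))"
    using False by (intro sum.cong refl ext) (simp add: bdb_sum length_del)
  also have "\<dots> = 0"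
  proof (rule ext)
    fix x show "(\<Sum>i<length s. (\<lambda>t. (-1) ^ i * (\<Sum>j<length s - 1. (\<lambda>t. (-1) ^ j * tuple_chain (del j (del i s)) t)) t)) x = 0 x"
      using alt_cancel[where s=s and h="\<lambda>u. tuple_chain u x"] by (simp add: sum_app)
  qed
  finally show ?thesis .
qed

lemma fin_bd[intro]: "fin c \<Longrightarrow> fin (bd c)"
  unfolding bd_lin by auto

lemma bd_bd: "fin c \<Longrightarrow> bd (bd c) = 0"
proof -
  assume c: "fin c"
  have z: "\<And>s. lin bdb (bdb s) = 0" using bd_bdb by (simp add: bd_lin)
  have "bd (bd c) = lin bdb (lin bdb c)" by (simp add: bd_lin)
  also have "\<dots> = lin (\<lambda>s. lin bdb (bdb s)) c" using c by (rule lin_comp) auto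
  also have "\<dots> = lin (\<lambda>s. 0) c" by (simp add: z)
  finally show ?thesis by simp
qed

lemma bd_add: "fin a \<Longrightarrow> fin b \<Longrightarrow> bd (a + b) = bd a + bd b"
  by (simp add: bd_lin lin_add)
lemma bd_diff: "fin a \<Longrightarrow> fin b \<Longrightarrow> bd (a - b) = bd a - bd b"
  by (simp add: bd_lin lin_diff)
lemma bd_zero[simp]: "bd 0 = 0"
  by (simp add: bd_lin)
lemma bd_tc[simp]: "bd (tuple_chain s) = bdb s"
  by (simp add: bd_lin)

lemma bd_lin_comm: "fin c \<Longrightarrow> (\<And>s. s \<in> supp c \<Longrightarrow> fin (f s)) \<Longrightarrow> bd (lin f c) = lin (\<lambda>s. bd (f s)) c"
  unfolding bd_lin by (rule lin_comp)

lemma bd_sum: "finite I \<Longrightarrow> (\<And>i. i \<in> I \<Longrightarrow> fin (c i)) \<Longrightarrow> bd (sum c I) = (\<Sum>i\<in>I. bd (c i))"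
  unfolding bd_lin by (rule lin_sum)
lemma bd_scal: "fin c \<Longrightarrow> bd (\<lambda>t. k * c t) = (\<lambda>t. k * bd c t)"
  unfolding bd_lin by (rule lin_scal)

section \<open>Chain maps and cones\<close>

lemma chain_map_lin: "fin c \<Longrightarrow> chain_map f c = lin (\<lambda>s. tuple_chain (map f s)) c"
  unfolding chain_map_def lin_def tuple_chain_def
  by (rule ext) (auto simp: sum.inter_filter intro!: sum.cong)

lemma fin_chain_map[intro]: "fin c \<Longrightarrow> fin (chain_map f c)"
  by (simp add: chain_map_lin fin_lin)

lemma supp_chain_map: "fin c \<Longrightarrow> supp (chain_map f c) \<subseteq> map f ` supp c"
  using supp_lin[of "\<lambda>s. tuple_chain (map f s)" c] by (auto simp: chain_map_lin supp_tc)

lemma chain_map_tc[simp]: "chain_map f (tuple_chain s) = tuple_chain (map f s)"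
  by (simp add: chain_map_lin)

lemma chain_map_lin_comm: "fin c \<Longrightarrow> (\<And>s. s \<in> supp c \<Longrightarrow> fin (g s)) \<Longrightarrow>
   chain_map f (lin g c) = lin (\<lambda>s. chain_map f (g s)) c"
proof -
  assume c: "fin c" and g: "\<And>s. s \<in> supp c \<Longrightarrow> fin (g s)"
  have "chain_map f (lin g c) = lin (\<lambda>s. tuple_chain (map f s)) (lin g c)"
    using c g by (intro chain_map_lin fin_lin)
  also have "\<dots> = lin (\<lambda>s. lin (\<lambda>s. tuple_chain (map f s)) (g s)) c"
    using c g by (rule lin_comp)
  also have "\<dots> = lin (\<lambda>s. chain_map f (g s)) c"
    using g by (intro lin_cong) (simp add: chain_map_lin)
  finally show ?thesis .
qed

lemma lin_chain_map: "fin c \<Longrightarrow> lin h (chain_map f c) = lin (\<lambda>s. h (map f s)) c"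
  by (simp add: chain_map_lin lin_comp)

lemma chain_map_add: "fin a \<Longrightarrow> fin b \<Longrightarrow> chain_map f (a + b) = chain_map f a + chain_map f b"
  by (simp add: chain_map_lin lin_add fin_add)
lemma chain_map_diff: "fin a \<Longrightarrow> fin b \<Longrightarrow> chain_map f (a - b) = chain_map f a - chain_map f b"
  by (simp add: chain_map_lin lin_diff fin_diff)
lemma chain_map_zero[simp]: "chain_map f 0 = 0"
  by (simp add: chain_map_lin)
lemma chain_map_sum: "finite I \<Longrightarrow> (\<And>i. i \<in> I \<Longrightarrow> fin (c i)) \<Longrightarrow> chain_map f (sum c I) = (\<Sum>i\<in>I. chain_map f (c i))"
  by (simp add: chain_map_lin lin_sum fin_sum)
lemma chain_map_scal: "fin c \<Longrightarrow> chain_map f (\<lambda>t. k * c t) = (\<lambda>t. k * chain_map f c t)"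
  by (simp add: chain_map_lin lin_scal fin_scal)

lemma bdb_map: "bdb (map f s) = chain_map f (bdb s)"
proof (cases "2 \<le> length s")
  case True
  have "chain_map f (bdb s) = chain_map f (\<Sum>i<length s. (\<lambda>t. (-1) ^ i * tuple_chain (del i s) t))"
    using True by (simp add: bdb_sum)
  also have "\<dots> = (\<Sum>i<length s. chain_map f (\<lambda>t. (-1) ^ i * tuple_chain (del i s) t))"
    by (rule chain_map_sum) auto
  also have "\<dots> = (\<Sum>i<length s. (\<lambda>t. (-1) ^ i * tuple_chain (del i (map f s)) t))"
    by (simp add: chain_map_scal del_map)
  also have "\<dots> = bdb (map f s)" using True by (simp add: bdb_sum)
  finally show ?thesis ..
next
  case False then show ?thesis by (simp add: bdb_short)
qed

lemma chain_map_bd: "fin c \<Longrightarrow> chain_map f (bd c) = bd (chain_map f c)"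
proof -
  assume c: "fin c"
  have "chain_map f (bd c) = lin (\<lambda>s. chain_map f (bdb s)) c"
    unfolding bd_lin using c by (rule chain_map_lin_comm) auto
  also have "\<dots> = lin (\<lambda>s. bdb (map f s)) c" by (simp add: bdb_map)
  also have "\<dots> = bd (chain_map f c)" unfolding bd_lin using c by (simp add: lin_chain_map)
  finally show ?thesis .
qed

lemma chain_map_comp: "fin c \<Longrightarrow> chain_map f (chain_map g c) = chain_map (f \<circ> g) c"
proof -
  assume c: "fin c"
  have "chain_map f (chain_map g c) = chain_map f (lin (\<lambda>s. tuple_chain (map g s)) c)"
    using c by (simp add: chain_map_lin[of c])
  also have "\<dots> = lin (\<lambda>s. chain_map f (tuple_chain (map g s))) c"
    using c by (rule chain_map_lin_comm) auto
  also have "\<dots> = chain_map (f \<circ> g) c" using c by (simp add: chain_map_lin[of c])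
  finally show ?thesis .
qed

definition cone :: "'w \<Rightarrow> 'w chain \<Rightarrow> 'w chain" where
  "cone Y c = (\<lambda>t. case t of [] \<Rightarrow> 0 | Y' # t' \<Rightarrow> if Y' = Y then c t' else 0)"

lemma supp_cone: "supp (cone Y c) = Cons Y ` supp c"
proof -
  have "\<And>t. t \<in> supp (cone Y c) \<longleftrightarrow> (\<exists>u. t = Y # u \<and> u \<in> supp c)"
    subgoal for t by (cases t) (auto simp: supp_def cone_def)
    done
  then show ?thesis by auto
qed
lemma fin_cone[intro]: "fin c \<Longrightarrow> fin (cone Y c)"
  by (simp add: supp_cone)
lemma cone_tc[simp]: "cone Y (tuple_chain u) = tuple_chain (Y # u)"
  by (rule ext) (auto simp: cone_def tuple_chain_def split: list.splits)
lemma cone_add: "cone Y (a + b) = cone Y a + cone Y b"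
  by (rule ext) (auto simp: cone_def split: list.splits)
lemma cone_diff: "cone Y (a - b) = cone Y a - cone Y b"
  by (rule ext) (auto simp: cone_def split: list.splits)
lemma cone_zero[simp]: "cone Y 0 = 0"
  by (rule ext) (auto simp: cone_def split: list.splits)
lemma cone_scal: "cone Y (\<lambda>t. k * c t) = (\<lambda>t. k * cone Y c t)"
  by (rule ext) (auto simp: cone_def split: list.splits)
lemma cone_sum: "cone Y (sum c I) = (\<Sum>i\<in>I. cone Y (c i))"
  by (rule ext) (auto simp: cone_def sum_app split: list.splits)

lemma cone_lin: "fin c \<Longrightarrow> cone Y c = lin (\<lambda>u. tuple_chain (Y # u)) c"
proof (rule ext)
  fix t assume c: "fin c"
  show "cone Y c t = lin (\<lambda>u. tuple_chain (Y # u)) c t"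
  proof (cases t)
    case Nil then show ?thesis by (simp add: cone_def lin_def tuple_chain_def)
  next
    case (Cons Y' t')
    have "lin (\<lambda>u. tuple_chain (Y # u)) c t = (\<Sum>s\<in>supp c. if s = t' then (if Y' = Y then c s else 0) else 0)"
      unfolding lin_def using Cons by (auto simp: tuple_chain_def intro!: sum.cong)
    also have "\<dots> = (if Y' = Y then c t' else 0)" using c by (auto simp: supp_def)
    finally show ?thesis using Cons by (simp add: cone_def)
  qed
qed

lemma chain_map_cone: "fin c \<Longrightarrow> chain_map g (cone Y c) = cone (g Y) (chain_map g c)"
  by (simp add: cone_lin[of c] fin_chain_map chain_map_lin_comm cone_lin[of "chain_map g c"] lin_chain_map)

lemma bdb2: "bdb [x, y] = tuple_chain [y] - tuple_chain [x]"
  by (rule ext) (simp add: bdb_sum sum_app numeral_2_eq_2 del_def)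

lemma bdb_cons: "2 \<le> length u \<Longrightarrow> bdb (Y # u) = tuple_chain u - cone Y (bdb u)"
proof -
  assume u: "2 \<le> length u"
  have "bdb (Y # u) = (\<Sum>i<Suc (length u). (\<lambda>t. (-1) ^ i * tuple_chain (del i (Y # u)) t))"
    using u by (simp add: bdb_sum)
  also have "\<dots> = tuple_chain u + (\<Sum>i<length u. (\<lambda>t. (-1) ^ Suc i * tuple_chain (Y # del i u) t))"
    by (subst sum.lessThan_Suc_shift) (simp del: sum.lessThan_Suc)
  also have "(\<Sum>i<length u. (\<lambda>t. (-1) ^ Suc i * tuple_chain (Y # del i u) t)) = 
     - (\<Sum>i<length u. (\<lambda>t. (-1) ^ i * tuple_chain (Y # del i u) t))"
    by (rule ext) (simp add: sum_app sum_negf)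
  also have "(\<Sum>i<length u. (\<lambda>t. (-1) ^ i * tuple_chain (Y # del i u) t)) = cone Y (bdb u)"
    using u by (simp add: bdb_sum cone_sum cone_scal)
  finally show ?thesis by (simp add: fun_eq_iff)
qed

lemma bd_cone: "fin c \<Longrightarrow> (\<And>s. s \<in> supp c \<Longrightarrow> 2 \<le> length s) \<Longrightarrow> bd (cone Y c) = c - cone Y (bd c)"
proof -
  assume c: "fin c" and l: "\<And>s. s \<in> supp c \<Longrightarrow> 2 \<le> length s"
  have "bd (cone Y c) = lin (\<lambda>u. bd (tuple_chain (Y # u))) c"
    unfolding cone_lin[OF c] using c by (rule bd_lin_comm) auto
  also have "\<dots> = lin (\<lambda>u. tuple_chain u - cone Y (bdb u)) c"
    by (rule lin_cong) (simp add: bdb_cons l)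
  also have "\<dots> = lin tuple_chain c - lin (\<lambda>u. cone Y (bdb u)) c"
    by (rule lin_fun_diff)
  also have "lin (\<lambda>u. cone Y (bdb u)) c = cone Y (bd c)"
    using c by (simp add: bd_lin cone_lin[of "lin bdb c"] fin_lin cone_lin[of "bdb _"] lin_comp)
  finally show ?thesis using c by (simp add: lin_id fun_eq_iff)
qed

section \<open>Subdivision chains\<close>

declare sdc.simps[simp del]

lemma sdc0: "sdc 0 s = tuple_chain [set s]"
  by (simp add: tuple_chain_def sdc.simps)

lemma sdc_Suc_cone: "sdc (Suc k) s = cone (set s) (\<Sum>i<length s. (\<lambda>t. (-1) ^ i * sdc k (del i s) t))"
  by (rule ext) (simp add: cone_def sum_app sdc.simps split: list.splits)

lemma fin_sdc[intro, simp]: "fin (sdc k s)"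
proof (induct k arbitrary: s)
  case 0 then show ?case by (simp add: sdc0)
next
  case (Suc k) then show ?case by (simp add: sdc_Suc_cone fin_cone fin_sum fin_scal)
qed

lemma supp_sdc: "length s = Suc k \<Longrightarrow> t \<in> supp (sdc k s) \<Longrightarrow>
  length t = Suc k \<and> (\<forall>Y\<in>set t. Y \<subseteq> set s \<and> Y \<noteq> {}) \<and> (\<forall>A\<in>set t. \<forall>B\<in>set t. A \<subseteq> B \<or> B \<subseteq> A)"
proof (induct k arbitrary: s t)
  case 0 then show ?case by (auto simp: sdc0 supp_tc)
next
  case (Suc k)
  from Suc.prems(2) obtain t' where t: "t = set s # t'" and t': "t' \<in> supp (\<Sum>i<length s. (\<lambda>t. (-1) ^ i * sdc k (del i s) t))"
    by (auto simp: sdc_Suc_cone supp_cone)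
  then obtain i where i: "i < length s" and ti: "t' \<in> supp (sdc k (del i s))"
    using supp_sum[of _ "{..<length s}"] supp_scal by blast
  have "length (del i s) = Suc k" using i Suc.prems(1) by (simp add: length_del)
  from Suc.hyps[OF this ti] have IH: "length t' = Suc k" "\<forall>Y\<in>set t'. Y \<subseteq> set (del i s) \<and> Y \<noteq> {}"
    "\<forall>A\<in>set t'. \<forall>B\<in>set t'. A \<subseteq> B \<or> B \<subseteq> A" by auto
  have "set s \<noteq> {}" using Suc.prems(1) by auto
  then show ?case using IH set_del[of i s] t by fastforce
qed

lemma bd_sdc: "length s = Suc (Suc k) \<Longrightarrow> bd (sdc (Suc k) s) = (\<Sum>i<length s. (\<lambda>t. (-1) ^ i * sdc k (del i s) t))"
proof (induct k arbitrary: s)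
  case 0
  then obtain a b where s: "s = [a, b]"
    by (metis Suc_length_conv length_0_conv)
  have C: "(\<Sum>i<length s. (\<lambda>t. (-1) ^ i * sdc 0 (del i s) t)) = tuple_chain [{b}] - tuple_chain [{a}]"
    by (rule ext) (simp add: s sum_app numeral_2_eq_2 del_def tuple_chain_def sdc0)
  have "bd (sdc (Suc 0) s) = bd (tuple_chain [{a,b}, {b}] - tuple_chain [{a,b}, {a}])"
    unfolding sdc_Suc_cone C by (simp add: cone_diff s)
  also have "\<dots> = tuple_chain [{b}] - tuple_chain [{a}]"
    by (simp add: bd_diff bdb2)
  finally show ?case using C by simp
next
  case (Suc k)
  define C where "C = (\<Sum>i<length s. (\<lambda>t. (-1) ^ i * sdc (Suc k) (del i s) t))"
  have fC: "fin C" unfolding C_def by (intro fin_sum fin_scal) auto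
  have lC: "\<And>t. t \<in> supp C \<Longrightarrow> 2 \<le> length t"
  proof -
    fix t assume "t \<in> supp C"
    then obtain i where i: "i < length s" and ti: "t \<in> supp (sdc (Suc k) (del i s))"
      unfolding C_def using supp_sum[of _ "{..<length s}"] supp_scal by blast
    have "length (del i s) = Suc (Suc k)" using i Suc.prems by (simp add: length_del)
    from supp_sdc[OF this ti] show "2 \<le> length t" by simp
  qed
  have "bd C = (\<Sum>i<length s. bd (\<lambda>t. (-1) ^ i * sdc (Suc k) (del i s) t))"
    unfolding C_def by (rule bd_sum) auto
  also have "\<dots> = (\<Sum>i<length s. (\<lambda>t. (-1) ^ i * (\<Sum>j<length s - 1. (\<lambda>t. (-1) ^ j * sdc k (del j (del i s)) t)) t))"
  proof (rule sum.cong[OF refl])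
    fix i assume "i \<in> {..<length s}"
    then have "length (del i s) = Suc (Suc k)" using Suc.prems by (simp add: length_del)
    then show "bd (\<lambda>t. (-1) ^ i * sdc (Suc k) (del i s) t) = (\<lambda>t. (-1) ^ i * (\<Sum>j<length s - 1. (\<lambda>t. (-1) ^ j * sdc k (del j (del i s)) t)) t)"
      using Suc.hyps Suc.prems by (simp add: bd_scal length_del)
  qed
  also have "\<dots> = 0"
  proof (rule ext)
    fix x show "(\<Sum>i<length s. (\<lambda>t. (-1) ^ i * (\<Sum>j<length s - 1. (\<lambda>t. (-1) ^ j * sdc k (del j (del i s)) t)) t)) x = 0 x"
      using alt_cancel[where s=s and h="\<lambda>u. sdc k u x"] by (simp add: sum_app)
  qed
  finally have "bd C = 0" .
  then show ?case unfolding sdc_Suc_cone[of "Suc k"] C_def[symmetric] by (simp add: bd_cone[OF fC lC])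
qed

lemma sdc_nat: "chain_map (image f) (sdc k s) = sdc k (map f s)"
proof (induct k arbitrary: s)
  case 0 then show ?case by (simp add: sdc0)
next
  case (Suc k)
  have "chain_map (image f) (sdc (Suc k) s) =
    cone (f ` set s) (chain_map (image f) (\<Sum>i<length s. (\<lambda>t. (-1) ^ i * sdc k (del i s) t)))"
    unfolding sdc_Suc_cone by (rule chain_map_cone) (intro fin_sum fin_scal, auto)
  also have "chain_map (image f) (\<Sum>i<length s. (\<lambda>t. (-1) ^ i * sdc k (del i s) t)) =
     (\<Sum>i<length s. chain_map (image f) (\<lambda>t. (-1) ^ i * sdc k (del i s) t))"
    by (rule chain_map_sum) auto
  also have "\<dots> = (\<Sum>i<length (map f s). (\<lambda>t. (-1) ^ i * sdc k (del i (map f s)) t))"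
    by (simp add: chain_map_scal Suc del_map)
  finally show ?case by (simp add: sdc_Suc_cone)
qed

section \<open>Acyclic carriers\<close>

primrec hom :: "('w list \<Rightarrow> 'u chain) \<Rightarrow> ('w list \<Rightarrow> 'u chain) \<Rightarrow> ('w list \<Rightarrow> 'u chain) \<Rightarrow>
   ('w list \<Rightarrow> 'u) \<Rightarrow> nat \<Rightarrow> 'w list \<Rightarrow> 'u chain" where
  "hom F G Hb a 0 s = Hb s"
| "hom F G Hb a (Suc k) s = cone (a s) (F s - G s - lin (hom F G Hb a k) (bdb s))"

lemma homotopy:
  assumes Pdel: "\<And>s i. P s \<Longrightarrow> i < length s \<Longrightarrow> 2 \<le> length s \<Longrightarrow> P (del i s)"
    and Pne: "\<And>s. P s \<Longrightarrow> s \<noteq> []"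
    and fF: "\<And>s. P s \<Longrightarrow> fin (F s)" and fG: "\<And>s. P s \<Longrightarrow> fin (G s)"
    and lenF: "\<And>s t. P s \<Longrightarrow> t \<in> supp (F s) \<Longrightarrow> length t = length s \<and> Car s t"
    and lenG: "\<And>s t. P s \<Longrightarrow> t \<in> supp (G s) \<Longrightarrow> length t = length s \<and> Car s t"
    and bdF: "\<And>s. P s \<Longrightarrow> bd (F s) = lin F (bdb s)"
    and bdG: "\<And>s. P s \<Longrightarrow> bd (G s) = lin G (bdb s)"
    and base: "\<And>s. P s \<Longrightarrow> length s = 1 \<Longrightarrow> fin (Hb s) \<and> bd (Hb s) = F s - G s \<and>
       (\<forall>t\<in>supp (Hb s). length t = 2 \<and> Car s t)"
    and carmono: "\<And>s i t. P s \<Longrightarrow> i < length s \<Longrightarrow> 2 \<le> length s \<Longrightarrow> Car (del i s) t \<Longrightarrow> Car s t"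
    and conec: "\<And>s t. P s \<Longrightarrow> Car s t \<Longrightarrow> Car s (a s # t)"
    and H: "H = (\<lambda>s. hom F G Hb a (length s - 1) s)"
  shows "P s \<Longrightarrow> fin (H s) \<and> (\<forall>t\<in>supp (H s). length t = Suc (length s) \<and> Car s t) \<and>
     bd (H s) = F s - G s - lin H (bdb s)"
proof -
  have main: "\<forall>s. P s \<longrightarrow> length s = Suc k \<longrightarrow> fin (hom F G Hb a k s) \<and>
     (\<forall>t\<in>supp (hom F G Hb a k s). length t = Suc (Suc k) \<and> Car s t) \<and>
     bd (hom F G Hb a k s) = F s - G s - lin H (bdb s)" for k
  proof (induct k)
    case 0
    show ?case
    proof (intro allI impI)
      fix s assume s: "P s" "length s = Suc 0"
      then have "bdb s = 0" by (simp add: bdb_short)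
      then show "fin (hom F G Hb a 0 s) \<and> (\<forall>t\<in>supp (hom F G Hb a 0 s). length t = Suc (Suc 0) \<and> Car s t) \<and>
         bd (hom F G Hb a 0 s) = F s - G s - lin H (bdb s)"
        using base[of s] s by (simp add: numeral_2_eq_2)
    qed
  next
    case (Suc k)
    show ?case
    proof (intro allI impI)
      fix s assume s: "P s" "length s = Suc (Suc k)"
      define B where "B = bdb s"
      have fB: "fin B" by (simp add: B_def)
      have uB: "\<And>u. u \<in> supp B \<Longrightarrow> P u \<and> length u = Suc k \<and> (\<forall>t. Car u t \<longrightarrow> Car s t)"
      proof -
        fix u assume "u \<in> supp B"
        then obtain i where i: "i < length s" "u = del i s" using supp_bdb B_def by blast
        then show "P u \<and> length u = Suc k \<and> (\<forall>t. Car u t \<longrightarrow> Car s t)"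
          using s Pdel[of s i] carmono[of s i] by (simp add: length_del)
      qed
      have IH: "\<And>u. u \<in> supp B \<Longrightarrow> fin (H u) \<and> (\<forall>t\<in>supp (H u). length t = Suc (Suc k) \<and> Car s t) \<and>
         bd (H u) = F u - G u - lin H (bdb u)"
        using Suc uB unfolding H by fastforce
      have linB: "lin (hom F G Hb a k) B = lin H B"
        by (rule lin_cong) (use uB H in auto)
      define c where "c = F s - G s - lin H B"
      have fc: "fin c" unfolding c_def using fF[OF s(1)] fG[OF s(1)] fB IH by (intro fin_diff fin_lin) auto
      have sc: "\<And>t. t \<in> supp c \<Longrightarrow> length t = Suc (Suc k) \<and> Car s t"
      proof -
        fix t assume "t \<in> supp c"
        then have "t \<in> supp (F s) \<or> t \<in> supp (G s) \<or> t \<in> supp (lin H B)"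
          unfolding c_def using supp_diff by blast
        then show "length t = Suc (Suc k) \<and> Car s t"
        proof (elim disjE)
          assume "t \<in> supp (lin H B)"
          then obtain u where "u \<in> supp B" "t \<in> supp (H u)" using supp_lin by blast
          then show ?thesis using IH by blast
        qed (use lenF lenG s in auto)
      qed
      have hs: "hom F G Hb a (Suc k) s = cone (a s) c" unfolding c_def by (simp add: linB[unfolded B_def] B_def)
      have "bd c = lin F B - lin G B - lin (\<lambda>u. bd (H u)) B"
        unfolding c_def using fF[OF s(1)] fG[OF s(1)] fB IH
        by (simp add: bd_diff fin_diff fin_lin bd_lin_comm bdF[OF s(1)] bdG[OF s(1)] B_def)
      also have "lin (\<lambda>u. bd (H u)) B = lin (\<lambda>u. F u - G u - lin H (bdb u)) B"
        by (rule lin_cong) (use IH in auto)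
      also have "\<dots> = lin F B - lin G B - lin (\<lambda>u. lin H (bdb u)) B"
        by (simp add: lin_fun_diff)
      also have "lin (\<lambda>u. lin H (bdb u)) B = lin H (lin bdb B)"
        using fB by (rule lin_comp[symmetric]) auto
      also have "lin bdb B = 0" unfolding B_def by (simp add: bd_lin[symmetric])
      finally have "bd c = 0" by (simp add: fun_eq_iff)
      then have "bd (hom F G Hb a (Suc k) s) = c"
        unfolding hs using fc sc by (simp add: bd_cone)
      moreover have "fin (hom F G Hb a (Suc k) s)" unfolding hs using fc by auto
      moreover have "\<forall>t\<in>supp (hom F G Hb a (Suc k) s). length t = Suc (Suc (Suc k)) \<and> Car s t"
        unfolding hs supp_cone using sc conec[OF s(1)] by auto
      ultimately show "fin (hom F G Hb a (Suc k) s) \<and>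
         (\<forall>t\<in>supp (hom F G Hb a (Suc k) s). length t = Suc (Suc (Suc k)) \<and> Car s t) \<and>
         bd (hom F G Hb a (Suc k) s) = F s - G s - lin H (bdb s)"
        by (simp add: c_def B_def)
    qed
  qed
  assume "P s"
  then obtain k where "length s = Suc k" using Pne by (cases s) auto
  then show ?thesis using main[of k] \<open>P s\<close> unfolding H by simp
qed

lemma homotopy_lin:
  assumes c: "fin c" and h: "\<And>s. s \<in> supp c \<Longrightarrow> fin (H s) \<and> bd (H s) = F s - G s - lin H (bdb s)"
  shows "bd (lin H c) = lin F c - lin G c - lin H (bd c)"
proof -
  have "bd (lin H c) = lin (\<lambda>s. bd (H s)) c" using c h by (intro bd_lin_comm) auto
  also have "\<dots> = lin (\<lambda>s. F s - G s - lin H (bdb s)) c" by (rule lin_cong) (use h in auto)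
  also have "\<dots> = lin F c - lin G c - lin (\<lambda>s. lin H (bdb s)) c" by (simp add: lin_fun_diff)
  also have "lin (\<lambda>s. lin H (bdb s)) c = lin H (bd c)"
    unfolding bd_lin using c by (rule lin_comp[symmetric]) auto
  finally show ?thesis .
qed

section \<open>Subdivision is a chain map; homology lemmas\<close>

lemma fin_sd_chain[simp, intro]: "fin (sd_chain s)"
  by (simp add: sd_chain_def)

lemma supp_sd_chain: "s \<noteq> [] \<Longrightarrow> t \<in> supp (sd_chain s) \<Longrightarrow>
  length t = length s \<and> (\<forall>Y\<in>set t. Y \<subseteq> set s \<and> Y \<noteq> {}) \<and> (\<forall>A\<in>set t. \<forall>B\<in>set t. A \<subseteq> B \<or> B \<subseteq> A)"
  unfolding sd_chain_def using supp_sdc[of s "length s - 1" t] by (cases s) auto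

lemma bd_sd_chain: "s \<noteq> [] \<Longrightarrow> bd (sd_chain s) = lin sd_chain (bdb s)"
proof -
  assume "s \<noteq> []"
  then obtain k where k: "length s = Suc k" by (cases s) auto
  show ?thesis
  proof (cases k)
    case 0
    then show ?thesis using k by (simp add: sd_chain_def sdc0 bdb_short)
  next
    case (Suc k')
    have "lin sd_chain (bdb s) = lin sd_chain (\<Sum>i<length s. (\<lambda>t. (-1) ^ i * tuple_chain (del i s) t))"
      using k Suc by (simp add: bdb_sum)
    also have "\<dots> = (\<Sum>i<length s. lin sd_chain (\<lambda>t. (-1) ^ i * tuple_chain (del i s) t))"
      by (rule lin_sum) auto
    also have "\<dots> = (\<Sum>i<length s. (\<lambda>t. (-1) ^ i * sdc k' (del i s) t))"
      using k Suc by (intro sum.cong refl) (simp add: lin_scal sd_chain_def length_del)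
    also have "\<dots> = bd (sd_chain s)" using k Suc by (simp add: sd_chain_def bd_sdc)
    finally show ?thesis ..
  qed
qed

lemma bd_lin_sd: "fin c \<Longrightarrow> (\<And>s. s \<in> supp c \<Longrightarrow> s \<noteq> []) \<Longrightarrow> bd (lin sd_chain c) = lin sd_chain (bd c)"
proof -
  assume c: "fin c" and ne: "\<And>s. s \<in> supp c \<Longrightarrow> s \<noteq> []"
  have "bd (lin sd_chain c) = lin (\<lambda>s. bd (sd_chain s)) c" using c by (rule bd_lin_comm) auto
  also have "\<dots> = lin (\<lambda>s. lin sd_chain (bdb s)) c" by (rule lin_cong) (simp add: bd_sd_chain ne)
  also have "\<dots> = lin sd_chain (bd c)" unfolding bd_lin using c by (rule lin_comp[symmetric]) auto
  finally show ?thesis .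
qed

lemma chains_fin: "c \<in> chains X p \<Longrightarrow> fin c"
  by (simp add: chains_def)
lemma chains_supp: "c \<in> chains X p \<Longrightarrow> s \<in> supp c \<Longrightarrow> length s = Suc p \<and> set s \<in> X"
  by (simp add: chains_def)
lemma chainsI: "fin c \<Longrightarrow> (\<And>s. s \<in> supp c \<Longrightarrow> length s = Suc p \<and> set s \<in> X) \<Longrightarrow> c \<in> chains X p"
  by (simp add: chains_def)
lemma chains_add: "a \<in> chains X p \<Longrightarrow> b \<in> chains X p \<Longrightarrow> a + b \<in> chains X p"
  unfolding chains_def using supp_add by blast
lemma chains_diff: "a \<in> chains X p \<Longrightarrow> b \<in> chains X p \<Longrightarrow> a - b \<in> chains X p"
  unfolding chains_def using supp_diff by blast
lemma chains_zero: "0 \<in> chains X p"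
  by (simp add: chains_def)
lemma chains_lin: "fin c \<Longrightarrow> (\<And>s. s \<in> supp c \<Longrightarrow> f s \<in> chains X p) \<Longrightarrow> lin f c \<in> chains X p"
  unfolding chains_def using supp_lin[of f c] by (auto intro!: fin_lin)
lemma chains_chain_map: "c \<in> chains X p \<Longrightarrow> (\<And>A. A \<in> X \<Longrightarrow> f ` A \<in> Y) \<Longrightarrow> chain_map f c \<in> chains Y p"
  unfolding chains_def using supp_chain_map[of c f] by auto

lemma hcls_alt: "hcls X p z = {z + bd b | b. b \<in> chains X (Suc p)}"
  by (auto simp: hcls_def bdries_def plus_fun_def)

lemma hcls_eq: "fin z \<Longrightarrow> b \<in> chains X (Suc p) \<Longrightarrow> hcls X p (z + bd b) = hcls X p z"
proof -
  assume z: "fin z" and b: "b \<in> chains X (Suc p)"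
  have fb: "fin b" using b by (rule chains_fin)
  show ?thesis unfolding hcls_alt
  proof (intro set_eqI iffI)
    fix x assume "x \<in> {z + bd b + bd b' |b'. b' \<in> chains X (Suc p)}"
    then obtain b' where b': "b' \<in> chains X (Suc p)" "x = z + bd b + bd b'" by auto
    then have "x = z + bd (b + b')" using fb chains_fin[OF b'(1)] by (simp add: bd_add add.assoc)
    then show "x \<in> {z + bd b |b. b \<in> chains X (Suc p)}" using chains_add[OF b b'(1)] by blast
  next
    fix x assume "x \<in> {z + bd b |b. b \<in> chains X (Suc p)}"
    then obtain b' where b': "b' \<in> chains X (Suc p)" "x = z + bd b'" by auto
    then have "x = z + bd b + bd (b' - b)" using fb chains_fin[OF b'(1)] by (simp add: bd_diff)
    then show "x \<in> {z + bd b + bd b' |b'. b' \<in> chains X (Suc p)}" using chains_diff[OF b'(1) b] by blast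
  qed
qed

lemma hcls_self: "z \<in> hcls X p z"
  unfolding hcls_alt using chains_zero by force

lemma hcls_mem: "x \<in> hcls X p z \<Longrightarrow> \<exists>b\<in>chains X (Suc p). x = z + bd b"
  unfolding hcls_alt by auto

lemma hmap_hcls:
  assumes z: "z \<in> chains X p" and f: "\<And>A. A \<in> X \<Longrightarrow> f ` A \<in> Y"
  shows "hmap Y p f (hcls X p z) = hcls Y p (chain_map f z)"
proof -
  have "(SOME w. w \<in> hcls X p z) \<in> hcls X p z" by (rule someI[where P="\<lambda>w. w \<in> hcls X p z", OF hcls_self])
  then obtain b where b: "b \<in> chains X (Suc p)" "(SOME w. w \<in> hcls X p z) = z + bd b"
    using hcls_mem by blast
  have fz: "fin z" "fin b" using z b chains_fin by auto
  have "chain_map f (z + bd b) = chain_map f z + bd (chain_map f b)"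
    using fz by (simp add: chain_map_add chain_map_bd fin_bd)
  moreover have "chain_map f b \<in> chains Y (Suc p)" using b(1) f by (rule chains_chain_map)
  ultimately show ?thesis unfolding hmap_def b(2) using fz by (simp add: hcls_eq fin_chain_map)
qed


section \<open>The two chain homotopies\<close>

lemma sd_approx_in: "Y \<noteq> {} \<Longrightarrow> sd_approx Y \<in> Y"
  unfolding sd_approx_def by (rule someI_ex) auto

lemma sd_approx_single[simp]: "sd_approx {v} = v"
  using sd_approx_in[of "{v}"] by auto

lemma chain_max: "finite F \<Longrightarrow> F \<noteq> {} \<Longrightarrow> (\<forall>A\<in>F. \<forall>B\<in>F. A \<subseteq> B \<or> B \<subseteq> A) \<Longrightarrow> \<Union>F \<in> F"
proof (induct F rule: finite_ne_induct)
  case (singleton x) then show ?case by simp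
next
  case (insert x F)
  then have "\<Union>F \<in> F" by blast
  then have "x \<subseteq> \<Union>F \<or> \<Union>F \<subseteq> x" using insert.prems by blast
  then show ?case using \<open>\<Union>F \<in> F\<close> by (auto simp: Un_absorb1 Un_absorb2)
qed

definition F1 :: "'a list \<Rightarrow> 'a chain" where
  "F1 s = chain_map sd_approx (sd_chain s)"
definition H1 :: "'a list \<Rightarrow> 'a chain" where
  "H1 = (\<lambda>s. hom F1 tuple_chain (\<lambda>_. 0) hd (length s - 1) s)"

lemma h1_del: "s \<noteq> [] \<Longrightarrow> i < length s \<Longrightarrow> 2 \<le> length s \<Longrightarrow> del i s \<noteq> []"
proof -
  assume "i < length s" "2 \<le> length s"
  then have "length (del i s) = length s - 1" by (simp add: length_del)
  then show "del i s \<noteq> []" using \<open>2 \<le> length s\<close> by (intro notI) simp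
qed

lemma h1_lenF: "s \<noteq> [] \<Longrightarrow> t \<in> supp (F1 s) \<Longrightarrow> length t = length s \<and> set t \<subseteq> set s"
proof -
  assume s: "s \<noteq> []" and t: "t \<in> supp (F1 s)"
  then obtain u where u: "u \<in> supp (sd_chain s)" "t = map sd_approx u"
    using supp_chain_map[of "sd_chain s" sd_approx] by (auto simp: F1_def)
  from supp_sd_chain[OF s u(1)] have h: "length u = length s" "\<forall>Y\<in>set u. Y \<subseteq> set s \<and> Y \<noteq> {}"
    by auto
  have "set t \<subseteq> set s"
  proof
    fix y assume "y \<in> set t"
    then obtain Y where Y: "Y \<in> set u" "y = sd_approx Y" using u(2) by auto
    then have "Y \<noteq> {}" "Y \<subseteq> set s" using h(2) by auto
    then show "y \<in> set s" using sd_approx_in[of Y] Y(2) by auto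
  qed
  then show ?thesis using h(1) u(2) by simp
qed

lemma h1_lenG: "s \<noteq> [] \<Longrightarrow> t \<in> supp (tuple_chain s) \<Longrightarrow> length t = length s \<and> set t \<subseteq> set s"
  by (simp add: supp_tc)

lemma h1_bdF: "s \<noteq> [] \<Longrightarrow> bd (F1 s) = lin F1 (bdb s)"
proof -
  assume s: "s \<noteq> []"
  have "bd (F1 s) = chain_map sd_approx (bd (sd_chain s))" by (simp add: F1_def chain_map_bd)
  also have "\<dots> = chain_map sd_approx (lin sd_chain (bdb s))" using s by (simp add: bd_sd_chain)
  also have "\<dots> = lin (\<lambda>u. chain_map sd_approx (sd_chain u)) (bdb s)" by (rule chain_map_lin_comm) auto
  finally show ?thesis by (simp add: F1_def[abs_def])
qed

lemma h1_base: "s \<noteq> [] \<Longrightarrow> length s = 1 \<Longrightarrow> fin ((\<lambda>_. 0) s) \<and> bd ((\<lambda>_. 0) s) = F1 s - tuple_chain s \<and>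
   (\<forall>t\<in>supp ((\<lambda>_. 0) s). length t = 2 \<and> set t \<subseteq> set s)"
proof -
  assume "length s = 1"
  then obtain v where "s = [v]" by (metis One_nat_def Suc_length_conv length_0_conv)
  then show ?thesis by (simp add: F1_def sd_chain_def sdc0)
qed

lemma h1_mono: "s \<noteq> [] \<Longrightarrow> i < length s \<Longrightarrow> 2 \<le> length s \<Longrightarrow> set t \<subseteq> set (del i s) \<Longrightarrow> set t \<subseteq> set s"
  using set_del[of i s] by (rule subset_trans[rotated])

lemma h1_cone: "s \<noteq> [] \<Longrightarrow> set t \<subseteq> set s \<Longrightarrow> set (hd s # t) \<subseteq> set s"
  by simp

lemma htpy1: "s \<noteq> [] \<Longrightarrow> fin (H1 s) \<and> (\<forall>t\<in>supp (H1 s). length t = Suc (length s) \<and> set t \<subseteq> set s) \<and>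
   bd (H1 s) = F1 s - tuple_chain s - lin H1 (bdb s)"
  by (rule homotopy[where P="\<lambda>s. s \<noteq> []" and Car="\<lambda>s t. set t \<subseteq> set s",
     OF h1_del _ _ _ h1_lenF h1_lenG h1_bdF _ h1_base h1_mono h1_cone H1_def]) (auto simp: F1_def lin_id)

definition flagP :: "'a set list \<Rightarrow> bool" where
  "flagP t \<longleftrightarrow> t \<noteq> [] \<and> (\<forall>Y\<in>set t. Y \<noteq> {}) \<and> (\<forall>A\<in>set t. \<forall>B\<in>set t. A \<subseteq> B \<or> B \<subseteq> A)"

definition F2 :: "'a set list \<Rightarrow> 'a set chain" where
  "F2 s = sd_chain (map sd_approx s)"
definition H20 :: "'a set list \<Rightarrow> 'a set chain" where
  "H20 s = tuple_chain [hd s, {sd_approx (hd s)}]"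
definition H2 :: "'a set list \<Rightarrow> 'a set chain" where
  "H2 = (\<lambda>s. hom F2 tuple_chain H20 (\<lambda>s. \<Union>(set s)) (length s - 1) s)"

lemma flagP_sub: "flagP s \<Longrightarrow> t \<noteq> [] \<Longrightarrow> set t \<subseteq> set s \<Longrightarrow> flagP t"
proof -
  assume s: "flagP s" and t: "t \<noteq> []" and sub: "set t \<subseteq> set s"
  have P: "\<forall>A\<in>set s. \<forall>B\<in>set s. A \<subseteq> B \<or> B \<subseteq> A" and N: "\<forall>Y\<in>set s. Y \<noteq> {}"
    using s by (simp_all add: flagP_def)
  have "\<forall>A\<in>set t. \<forall>B\<in>set t. A \<subseteq> B \<or> B \<subseteq> A"
  proof (intro ballI)
    fix A B assume "A \<in> set t" "B \<in> set t"
    then have A: "A \<in> set s" and B: "B \<in> set s" using sub by auto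
    from P A have "\<forall>B\<in>set s. A \<subseteq> B \<or> B \<subseteq> A" by (rule bspec)
    from this B show "A \<subseteq> B \<or> B \<subseteq> A" by (rule bspec)
  qed
  moreover have "\<forall>Y\<in>set t. Y \<noteq> {}" using N sub by auto
  ultimately show "flagP t" using t by (simp add: flagP_def)
qed

lemma h2_del: "flagP s \<Longrightarrow> i < length s \<Longrightarrow> 2 \<le> length s \<Longrightarrow> flagP (del i s)"
proof -
  assume "flagP s" "i < length s" "2 \<le> length s"
  moreover then have "del i s \<noteq> []" using length_del[of i s] by auto
  ultimately show "flagP (del i s)" using set_del[of i s] flagP_sub by blast
qed

lemma h2_ne: "flagP s \<Longrightarrow> s \<noteq> []" by (simp add: flagP_def)

lemma h2_lenF: "flagP s \<Longrightarrow> t \<in> supp (F2 s) \<Longrightarrow> length t = length s \<and> flagP t \<and> (\<forall>Y\<in>set t. Y \<subseteq> \<Union>(set s))"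
proof -
  assume s: "flagP s" and t: "t \<in> supp (F2 s)"
  have ne: "map sd_approx s \<noteq> []" using s by (simp add: flagP_def)
  from supp_sd_chain[OF ne] t have h: "length t = length s" "\<forall>Y\<in>set t. Y \<subseteq> sd_approx ` set s \<and> Y \<noteq> {}"
    "\<forall>A\<in>set t. \<forall>B\<in>set t. A \<subseteq> B \<or> B \<subseteq> A" by (auto simp: F2_def)
  have "sd_approx ` set s \<subseteq> \<Union>(set s)"
  proof
    fix y assume "y \<in> sd_approx ` set s"
    then obtain Y where Y: "Y \<in> set s" "y = sd_approx Y" by auto
    then have "Y \<noteq> {}" using s by (simp add: flagP_def)
    then have "sd_approx Y \<in> Y" by (rule sd_approx_in)
    then show "y \<in> \<Union>(set s)" using Y by auto
  qed
  note * = this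
  have "t \<noteq> []" using h(1) ne by auto
  then have "flagP t" using h(2,3) by (simp add: flagP_def)
  moreover have "\<forall>Y\<in>set t. Y \<subseteq> \<Union>(set s)"
  proof
    fix Y assume "Y \<in> set t"
    then have "Y \<subseteq> sd_approx ` set s" using h(2) by simp
    then show "Y \<subseteq> \<Union>(set s)" using * by (rule subset_trans)
  qed
  ultimately show ?thesis using h(1) by simp
qed

lemma h2_lenG: "flagP s \<Longrightarrow> t \<in> supp (tuple_chain s) \<Longrightarrow> length t = length s \<and> flagP t \<and> (\<forall>Y\<in>set t. Y \<subseteq> \<Union>(set s))"
  by (auto simp: supp_tc)

lemma h2_bdF: "flagP s \<Longrightarrow> bd (F2 s) = lin F2 (bdb s)"
  by (simp add: F2_def[abs_def] flagP_def bd_sd_chain bdb_map lin_chain_map)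

lemma h2_bdG: "bd (tuple_chain s) = lin tuple_chain (bdb s)"
  by (simp add: lin_id)

lemma h2_base: "flagP s \<Longrightarrow> length s = 1 \<Longrightarrow> fin (H20 s) \<and> bd (H20 s) = F2 s - tuple_chain s \<and>
     (\<forall>t\<in>supp (H20 s). length t = 2 \<and> flagP t \<and> (\<forall>Y\<in>set t. Y \<subseteq> \<Union>(set s)))"
proof -
  assume s: "flagP s" "length s = 1"
  then obtain Y where Y: "s = [Y]" by (metis One_nat_def Suc_length_conv length_0_conv)
  then have "Y \<noteq> {}" using s by (simp add: flagP_def)
  then have "sd_approx Y \<in> Y" by (rule sd_approx_in)
  then show ?thesis
    using Y \<open>Y \<noteq> {}\<close> by (auto simp: H20_def F2_def supp_tc bdb2 sd_chain_def sdc0 flagP_def)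
qed

lemma h2_mono: "flagP s \<Longrightarrow> i < length s \<Longrightarrow> 2 \<le> length s \<Longrightarrow> flagP t \<and> (\<forall>Y\<in>set t. Y \<subseteq> \<Union>(set (del i s))) \<Longrightarrow> flagP t \<and> (\<forall>Y\<in>set t. Y \<subseteq> \<Union>(set s))"
proof -
  assume a: "flagP t \<and> (\<forall>Y\<in>set t. Y \<subseteq> \<Union>(set (del i s)))"
  have "\<Union>(set (del i s)) \<subseteq> \<Union>(set s)" using set_del[of i s] by (rule Union_mono)
  then show ?thesis using a by (meson subset_trans)
qed

lemma h2_cone: "flagP s \<Longrightarrow> flagP t \<and> (\<forall>Y\<in>set t. Y \<subseteq> \<Union>(set s)) \<Longrightarrow> flagP (\<Union>(set s) # t) \<and> (\<forall>Y\<in>set (\<Union>(set s) # t). Y \<subseteq> \<Union>(set s))"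
proof -
  assume s: "flagP s" and c: "flagP t \<and> (\<forall>Y\<in>set t. Y \<subseteq> \<Union>(set s))"
  have "\<Union>(set s) \<noteq> {}" using s by (cases s) (auto simp: flagP_def)
  then show ?thesis using c by (auto simp: flagP_def)
qed

lemma htpy2: "flagP s \<Longrightarrow> fin (H2 s) \<and>
   (\<forall>t\<in>supp (H2 s). length t = Suc (length s) \<and> (flagP t \<and> (\<forall>Y\<in>set t. Y \<subseteq> \<Union>(set s)))) \<and>
   bd (H2 s) = F2 s - tuple_chain s - lin H2 (bdb s)"
  by (rule homotopy[where P="flagP" and Car="\<lambda>s t. flagP t \<and> (\<forall>Y\<in>set t. Y \<subseteq> \<Union>(set s))",
     OF h2_del h2_ne _ _ h2_lenF h2_lenG h2_bdF h2_bdG h2_base h2_mono h2_cone H2_def]) (auto simp: F2_def)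



lemma dim_mono_fin:
  assumes vs: "vector_space scale" and T: "finite T" and ST: "S \<subseteq> T"
  shows "vector_space.dim scale S \<le> vector_space.dim scale T"
proof -
  interpret V: vector_space scale by (rule vs)
  obtain B where B: "B \<subseteq> T" "V.independent B" "T \<subseteq> V.span B" "card B = V.dim T"
    by (rule V.basis_exists)
  have "S \<subseteq> V.span B" using ST B(3) by auto
  moreover have "finite B" using B(1) T by (rule finite_subset)
  ultimately have "V.dim S \<le> card B" by (rule V.dim_le_card)
  then show ?thesis using B(4) by simp
qed

lemma card_set_del: "i < length s \<Longrightarrow> card (set (del i s)) < length s"
proof -
  assume "i < length s"
  then have "card (set (del i s)) \<le> length (del i s)" by (rule card_length[of "del i s"] | simp add: card_length)
  also have "length (del i s) < length s" using \<open>i < length s\<close> by (simp add: length_del)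
  finally show ?thesis .
qed


theorem theorem6p1:
  fixes scale :: "'a::idom fract \<Rightarrow> 'v::ab_group_add \<Rightarrow> 'v"
    and M :: "'v set" and n :: nat and Q :: "'v list"
  assumes "noetherian_ring TYPE('a)"
    and "vector_space scale"
    and "fg_A_submodule scale M"
    and "module.span scale M = UNIV"
    and "vector_space.dim scale (UNIV :: 'v set) = n"
    and "n \<ge> 2"
    and "length Q = n"
    and "set Q \<subseteq> M - {0}"
    and "module.span scale (set Q) = UNIV"
  shows "ar scale M n Q = modsym scale Q"
proof -
  note vs = assms(2)
  interpret V: vector_space scale by (rule vs)
  have dimU: "V.dim UNIV = n" using assms(5) .
  have lenQ: "length Q = n" using assms(7) .
  have setQ: "set Q \<subseteq> M - {0}" using assms(8) .
  define p where "p = n - 2"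
  have np: "n = Suc (Suc p)" using assms(6) by (simp add: p_def)
  define X where "X = cplxE M"
  define Xs where "Xs = cplxEstar scale M n"
  define S where "S = sd Xs"
  define T where "T = tits scale"
  define Sig where "Sig = Sigma_cplx n"

  have XsD: "\<And>Y. Y \<in> Xs \<Longrightarrow> Y \<noteq> {} \<and> finite Y \<and> Y \<subseteq> M - {0} \<and> V.dim Y < n"
    by (simp add: Xs_def cplxEstar_def cplxE_def)
  have XsI: "\<And>Y. Y \<noteq> {} \<Longrightarrow> finite Y \<Longrightarrow> Y \<subseteq> M - {0} \<Longrightarrow> card Y < n \<Longrightarrow> Y \<in> Xs"
  proof -
    fix Y assume Y: "Y \<noteq> {}" "finite Y" "Y \<subseteq> M - {0}" "card Y < n"
    have "V.dim Y \<le> card Y" using Y(2) by (rule V.dim_le_card')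
    then show "Y \<in> Xs" using Y by (simp add: Xs_def cplxEstar_def cplxE_def)
  qed
  have XsSub: "\<And>Y Z. Z \<in> Xs \<Longrightarrow> Y \<subseteq> Z \<Longrightarrow> Y \<noteq> {} \<Longrightarrow> Y \<in> Xs"
  proof -
    fix Y Z assume Z: "Z \<in> Xs" and YZ: "Y \<subseteq> Z" and Y: "Y \<noteq> {}"
    from XsD[OF Z] have Z': "finite Z" "Z \<subseteq> M - {0}" "V.dim Z < n" by auto
    have "V.dim Y \<le> V.dim Z" using dim_mono_fin[OF vs Z'(1) YZ] .
    then show "Y \<in> Xs" using Z' YZ Y finite_subset[OF YZ Z'(1)]
      by (simp add: Xs_def cplxEstar_def cplxE_def)
  qed
  have SD: "\<And>A. A \<in> S \<Longrightarrow> A \<noteq> {} \<and> finite A \<and> A \<subseteq> Xs \<and> (\<forall>B\<in>A. \<forall>C\<in>A. B \<subseteq> C \<or> C \<subseteq> B)"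
    by (simp add: S_def sd_def)
  have Smax: "\<And>A. A \<in> S \<Longrightarrow> \<Union>A \<in> A"
  proof -
    fix A assume A: "A \<in> S"
    from SD[OF A] show "\<Union>A \<in> A" by (intro chain_max) auto
  qed
  have flag_in_S: "\<And>t Z. flagP t \<Longrightarrow> (\<forall>Y\<in>set t. Y \<subseteq> Z) \<Longrightarrow> Z \<in> Xs \<Longrightarrow> set t \<in> S"
  proof -
    fix t Z assume t: "flagP t" and tZ: "\<forall>Y\<in>set t. Y \<subseteq> Z" and Z: "Z \<in> Xs"
    have "set t \<subseteq> Xs" using t tZ XsSub[OF Z] by (auto simp: flagP_def)
    then show "set t \<in> S" using t by (auto simp: S_def sd_def flagP_def)
  qed
  have S_flagP: "\<And>s. set s \<in> S \<Longrightarrow> flagP s"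
  proof -
    fix s assume s: "set s \<in> S"
    from SD[OF s] have "set s \<noteq> {}" "set s \<subseteq> Xs" "\<forall>B\<in>set s. \<forall>C\<in>set s. B \<subseteq> C \<or> C \<subseteq> B" by auto
    moreover have "\<forall>Y\<in>set s. Y \<noteq> {}" using \<open>set s \<subseteq> Xs\<close> XsD by auto
    ultimately show "flagP s" by (simp add: flagP_def)
  qed
  have lam_map: "\<And>A. A \<in> S \<Longrightarrow> sd_approx ` A \<in> Xs"
  proof -
    fix A assume A: "A \<in> S"
    have Z: "\<Union>A \<in> Xs" using Smax[OF A] SD[OF A] by auto
    have "sd_approx ` A \<subseteq> \<Union>A"
    proof
      fix y assume "y \<in> sd_approx ` A"
      then obtain Y where Y: "Y \<in> A" "y = sd_approx Y" by auto
      then have "Y \<noteq> {}" using SD[OF A] XsD[of Y] by auto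
      then have "sd_approx Y \<in> Y" by (rule sd_approx_in)
      then show "y \<in> \<Union>A" using Y by auto
    qed
    moreover have "sd_approx ` A \<noteq> {}" using SD[OF A] by auto
    ultimately show "sd_approx ` A \<in> Xs" by (rule XsSub[OF Z])
  qed
  have span_vert: "\<And>Y. Y \<in> Xs \<Longrightarrow> V.subspace (V.span Y) \<and> V.span Y \<noteq> {0} \<and> V.span Y \<noteq> UNIV"
  proof -
    fix Y assume Y: "Y \<in> Xs"
    from XsD[OF Y] obtain y where y: "y \<in> Y" "y \<noteq> 0" by auto
    from y(1) have "y \<in> V.span Y" by (rule V.span_base)
    then have ne0: "V.span Y \<noteq> {0}" using y by auto
    have "V.span Y \<noteq> UNIV"
    proof
      assume "V.span Y = UNIV"
      then have "V.dim (V.span Y) = n" using dimU by simp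
      then show False using XsD[OF Y] by simp
    qed
    then show "V.subspace (V.span Y) \<and> V.span Y \<noteq> {0} \<and> V.span Y \<noteq> UNIV" using ne0 by simp
  qed
  have span_map: "\<And>A. A \<in> S \<Longrightarrow> V.span ` A \<in> T"
  proof -
    fix A assume A: "A \<in> S"
    from SD[OF A] have A': "A \<noteq> {}" "finite A" "A \<subseteq> Xs" "\<forall>B\<in>A. \<forall>C\<in>A. B \<subseteq> C \<or> C \<subseteq> B" by auto
    have "\<forall>W\<in>V.span ` A. V.subspace W \<and> W \<noteq> {0} \<and> W \<noteq> UNIV" using A'(3) span_vert by auto
    moreover have "\<forall>W1\<in>V.span ` A. \<forall>W2\<in>V.span ` A. W1 \<subseteq> W2 \<or> W2 \<subseteq> W1"
    proof (intro ballI)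
      fix W1 W2 assume "W1 \<in> V.span ` A" "W2 \<in> V.span ` A"
      then obtain B C where BC: "B \<in> A" "C \<in> A" "W1 = V.span B" "W2 = V.span C" by auto
      from A'(4) BC(1,2) have "B \<subseteq> C \<or> C \<subseteq> B" by simp
      then show "W1 \<subseteq> W2 \<or> W2 \<subseteq> W1" using BC(3,4) V.span_mono by auto
    qed
    ultimately show "V.span ` A \<in> T" using A' by (simp add: T_def tits_def)
  qed
  define G where "G = (\<lambda>I::nat set. (\<lambda>i. Q ! i) ` I)"
  have G_vert: "\<And>I. I \<noteq> {} \<Longrightarrow> I \<subset> {0..<n} \<Longrightarrow> G I \<in> Xs"
  proof -
    fix I assume I: "I \<noteq> {}" "I \<subset> {0..<n}"
    have fI: "finite I" using I(2) finite_subset by blast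
    have cI: "card I < n" using psubset_card_mono[OF _ I(2)] by simp
    have "G I \<subseteq> set Q" using I(2) lenQ by (auto simp: G_def)
    moreover have "card (G I) \<le> card I" unfolding G_def using fI by (rule card_image_le)
    ultimately show "G I \<in> Xs" using XsI[of "G I"] I(1) fI cI setQ by (auto simp: G_def)
  qed
  have Sig_map: "\<And>A. A \<in> Sig \<Longrightarrow> (\<lambda>I. V.span ((\<lambda>i. Q ! i) ` I)) ` A \<in> T"
  proof -
    fix A assume A: "A \<in> Sig"
    then have A': "A \<noteq> {}" "finite A" "\<forall>I\<in>A. I \<noteq> {} \<and> I \<subset> {0..<n}" "\<forall>I\<in>A. \<forall>J\<in>A. I \<subseteq> J \<or> J \<subseteq> I"
      by (simp_all add: Sig_def Sigma_cplx_def)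
    have "G ` A \<in> S"
    proof -
      have "G ` A \<subseteq> Xs" using A'(3) G_vert by auto
      moreover have "\<forall>B\<in>G ` A. \<forall>C\<in>G ` A. B \<subseteq> C \<or> C \<subseteq> B"
      proof (intro ballI)
        fix B C assume "B \<in> G ` A" "C \<in> G ` A"
        then obtain I J where IJ: "I \<in> A" "J \<in> A" "B = G I" "C = G J" by auto
        from A'(4) IJ(1,2) have "I \<subseteq> J \<or> J \<subseteq> I" by simp
        then show "B \<subseteq> C \<or> C \<subseteq> B" using IJ(3,4) by (auto simp: G_def)
      qed
      ultimately show ?thesis using A'(1,2) by (simp add: S_def sd_def)
    qed
    then have "V.span ` G ` A \<in> T" by (rule span_map)
    then show "(\<lambda>I. V.span ((\<lambda>i. Q ! i) ` I)) ` A \<in> T" by (simp add: G_def image_image)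
  qed

  have Qne: "Q \<noteq> []" using lenQ np by auto
  define z0 where "z0 = bd (sd_chain Q)"
  have z0_lin: "z0 = lin sd_chain (bdb Q)" unfolding z0_def using Qne by (rule bd_sd_chain)
  have delQ: "\<And>u. u \<in> supp (bdb Q) \<Longrightarrow> length u = Suc p \<and> set u \<in> Xs"
  proof -
    fix u assume "u \<in> supp (bdb Q)"
    then obtain i where i: "i < length Q" "u = del i Q" using supp_bdb by blast
    have l: "length u = Suc p" using i np lenQ by (simp add: length_del)
    have "set u \<in> Xs"
    proof (rule XsI)
      show "set u \<noteq> {}" using l by auto
      show "set u \<subseteq> M - {0}" using set_del[of i Q] setQ i by auto
      show "card (set u) < n" using card_set_del[OF i(1)] i lenQ by simp
    qed simp
    then show "length u = Suc p \<and> set u \<in> Xs" using l by simp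
  qed
  have sd_in_S: "\<And>u q. length u = Suc q \<Longrightarrow> set u \<in> Xs \<Longrightarrow> sd_chain u \<in> chains S q"
  proof -
    fix u q assume u: "length u = Suc q" "set u \<in> Xs"
    have une: "u \<noteq> []" using u by auto
    show "sd_chain u \<in> chains S q"
    proof (rule chainsI)
      fix t assume t: "t \<in> supp (sd_chain u)"
      from supp_sd_chain[OF une t] have h: "length t = length u" "\<forall>Y\<in>set t. Y \<subseteq> set u \<and> Y \<noteq> {}"
        "\<forall>A\<in>set t. \<forall>B\<in>set t. A \<subseteq> B \<or> B \<subseteq> A" by auto
      have "flagP t" using h une by (auto simp: flagP_def)
      then have "set t \<in> S" using h(2) u(2) flag_in_S by blast
      then show "length t = Suc q \<and> set t \<in> S" using h(1) u(1) by simp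
    qed simp
  qed
  have z0_ch: "z0 \<in> chains S p"
    unfolding z0_lin by (rule chains_lin) (auto intro: sd_in_S dest: delQ)
  have fz0: "fin z0" using z0_ch by (rule chains_fin)
  have z0_cyc: "z0 \<in> cycles S p"
    using z0_ch by (simp add: cycles_def z0_def bd_bd zero_fun_def[symmetric])
  define c0 where "c0 = hcls S p z0"
  have c0_hom: "c0 \<in> homology S p" using z0_cyc by (simp add: c0_def homology_def)

  have conn_eq: "conn Xs p (rel_cls X Xs (n - 1) (tuple_chain Q)) = hcls Xs p (bdb Q)"
  proof -
    have n1: "n - 1 = Suc p" using np by simp
    let ?R = "rel_cls X Xs (Suc p) (tuple_chain Q)"
    have "(\<lambda>s. tuple_chain Q s + 0 s + bd 0 s) \<in> ?R"
      unfolding rel_cls_def using chains_zero by blast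
    then have "(SOME x. x \<in> ?R) \<in> ?R" by (rule someI[of "\<lambda>x. x \<in> ?R"])
    then obtain a b where ab: "a \<in> chains Xs (Suc p)" "b \<in> chains X (Suc (Suc p))"
      "(SOME x. x \<in> ?R) = (\<lambda>s. tuple_chain Q s + a s + bd b s)"
      unfolding rel_cls_def by blast
    have fa: "fin a" "fin b" using ab chains_fin by auto
    have "(\<lambda>s. tuple_chain Q s + a s + bd b s) = tuple_chain Q + a + bd b" by (simp add: fun_eq_iff)
    then have "bd (SOME x. x \<in> ?R) = bdb Q + bd a"
      using ab(3) fa by (simp add: bd_add fin_add fin_bd bd_bd)
    then show ?thesis unfolding conn_def n1 using hcls_eq[OF fin_bdb ab(1)] by simp
  qed

  have hmap_c0: "hmap Xs p sd_approx c0 = hcls Xs p (bdb Q)"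
  proof -
    have "hmap Xs p sd_approx c0 = hcls Xs p (chain_map sd_approx z0)"
      unfolding c0_def using z0_ch lam_map by (rule hmap_hcls)
    also have "chain_map sd_approx z0 = bd (F1 Q)" using fz0
      by (simp add: z0_def F1_def chain_map_bd)
    also have "bd (F1 Q) = bdb Q + bd (lin H1 (bdb Q))"
    proof -
      have hF: "F1 Q = bd (H1 Q) + tuple_chain Q + lin H1 (bdb Q)"
        using htpy1[OF Qne] by (simp add: algebra_simps)
      have fH: "fin (H1 Q)" using htpy1[OF Qne] by simp
      have fL: "fin (lin H1 (bdb Q))"
      proof (rule fin_lin)
        fix u assume "u \<in> supp (bdb Q)"
        then have "u \<noteq> []" using delQ by fastforce
        then show "fin (H1 u)" using htpy1 by blast
      qed simp
      show ?thesis unfolding hF using fH fL by (simp add: bd_add fin_add fin_bd bd_bd)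
    qed
    also have "hcls Xs p \<dots> = hcls Xs p (bdb Q)"
    proof (rule hcls_eq)
      show "lin H1 (bdb Q) \<in> chains Xs (Suc p)"
      proof (rule chains_lin)
        fix u assume u: "u \<in> supp (bdb Q)"
        from delQ[OF u] have lu: "length u = Suc p" "set u \<in> Xs" by auto
        have une: "u \<noteq> []" using lu by auto
        from htpy1[OF une] have h: "fin (H1 u)" "\<forall>t\<in>supp (H1 u). length t = Suc (length u) \<and> set t \<subseteq> set u" by auto
        show "H1 u \<in> chains Xs (Suc p)"
        proof (rule chainsI[OF h(1)])
          fix t assume t: "t \<in> supp (H1 u)"
          then have lt: "length t = Suc (Suc p)" "set t \<subseteq> set u" using h(2) lu by auto
          have "t \<noteq> []" using lt(1) by (cases t) auto
          then have "set t \<in> Xs" using XsSub[OF lu(2) lt(2)] by simp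
          then show "length t = Suc (Suc p) \<and> set t \<in> Xs" using lt by simp
        qed
      qed simp
    qed simp
    finally show ?thesis .
  qed

  have uniq: "\<And>c. c \<in> homology S p \<Longrightarrow> hmap Xs p sd_approx c = hcls Xs p (bdb Q) \<Longrightarrow> c = c0"
  proof -
    fix c assume c: "c \<in> homology S p" and hc: "hmap Xs p sd_approx c = hcls Xs p (bdb Q)"
    then obtain z where z: "z \<in> cycles S p" "c = hcls S p z" by (auto simp: homology_def)
    have zc: "z \<in> chains S p" and bz: "bd z = 0" using z(1) by (auto simp: cycles_def zero_fun_def)
    have fz: "fin z" using zc by (rule chains_fin)
    have "hcls Xs p (chain_map sd_approx z) = hcls Xs p (chain_map sd_approx z0)"
      using hc hmap_c0 hmap_hcls[OF zc lam_map] hmap_hcls[OF z0_ch lam_map] z(2) c0_def by simp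
    then have "chain_map sd_approx z \<in> hcls Xs p (chain_map sd_approx z0)"
      using hcls_self by metis
    then obtain w where w: "w \<in> chains Xs (Suc p)" "chain_map sd_approx z = chain_map sd_approx z0 + bd w"
      using hcls_mem by blast
    define y where "y = z - z0"
    have fy: "fin y" using fz fz0 by (simp add: y_def fin_diff)
    have yc: "y \<in> chains S p" using zc z0_ch by (simp add: y_def chains_diff)
    have by0: "bd y = 0" using bz fz fz0 by (simp add: y_def bd_diff z0_def bd_bd)
    have fw: "fin w" using w(1) by (rule chains_fin)
    have "chain_map sd_approx y = bd w" using w(2) fz fz0 by (simp add: y_def chain_map_diff)
    then have "lin sd_chain (chain_map sd_approx y) = lin sd_chain (bd w)" by simp
    also have "lin sd_chain (chain_map sd_approx y) = lin F2 y"
      using fy by (simp add: lin_chain_map F2_def[abs_def])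
    also have "lin sd_chain (bd w) = bd (lin sd_chain w)"
    proof (rule bd_lin_sd[OF fw, symmetric])
      fix s assume "s \<in> supp w" then have "length s = Suc (Suc p)" using chains_supp[OF w(1)] by blast
      then show "s \<noteq> []" by (cases s) auto
    qed
    finally have F2y: "lin F2 y = bd (lin sd_chain w)" .
    have yP: "\<And>s. s \<in> supp y \<Longrightarrow> flagP s" using chains_supp[OF yc] S_flagP by blast
    have "bd (lin H2 y) = lin F2 y - lin tuple_chain y - lin H2 (bd y)"
      by (rule homotopy_lin[OF fy]) (use htpy2 yP in blast)
    then have "y = bd (lin sd_chain w) - bd (lin H2 y)"
      using F2y by (simp add: by0 lin_id[OF fy] algebra_simps)
    also have "\<dots> = bd (lin sd_chain w - lin H2 y)"
      by (rule bd_diff[symmetric]) (use fw fy htpy2 yP in \<open>auto intro!: fin_lin\<close>)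
    finally have yb: "y = bd (lin sd_chain w - lin H2 y)" .
    have bch: "lin sd_chain w - lin H2 y \<in> chains S (Suc p)"
    proof (rule chains_diff)
      show "lin sd_chain w \<in> chains S (Suc p)"
      proof (rule chains_lin[OF fw])
        fix u assume "u \<in> supp w"
        then show "sd_chain u \<in> chains S (Suc p)" using chains_supp[OF w(1)] sd_in_S by blast
      qed
      show "lin H2 y \<in> chains S (Suc p)"
      proof (rule chains_lin[OF fy])
        fix s assume s: "s \<in> supp y"
        from chains_supp[OF yc s] have ls: "length s = Suc p" "set s \<in> S" by auto
        have Z: "\<Union>(set s) \<in> Xs" using Smax[OF ls(2)] SD[OF ls(2)] by blast
        from htpy2[OF yP[OF s]] have h: "fin (H2 s)"
          "\<forall>t\<in>supp (H2 s). length t = Suc (length s) \<and> flagP t \<and> (\<forall>Y\<in>set t. Y \<subseteq> \<Union>(set s))" by auto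
        show "H2 s \<in> chains S (Suc p)"
        proof (rule chainsI[OF h(1)])
          fix t assume "t \<in> supp (H2 s)"
          with h(2) have "length t = Suc (length s)" "flagP t" "\<forall>Y\<in>set t. Y \<subseteq> \<Union>(set s)" by auto
          then show "length t = Suc (Suc p) \<and> set t \<in> S" using flag_in_S Z ls(1) by auto
        qed
      qed
    qed
    have "z = z0 + bd (lin sd_chain w - lin H2 y)" using yb by (simp add: y_def algebra_simps)
    then have "hcls S p z = hcls S p z0" using hcls_eq[OF fz0 bch] by simp
    then show "c = c0" using z(2) c0_def by simp
  qed

  have the_eq: "(THE c. c \<in> homology S p \<and> hmap Xs p sd_approx c = conn Xs p (rel_cls X Xs (n - 1) (tuple_chain Q))) = c0"
  proof (rule the_equality)
    show "c0 \<in> homology S p \<and> hmap Xs p sd_approx c0 = conn Xs p (rel_cls X Xs (n - 1) (tuple_chain Q))"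
      using c0_hom hmap_c0 conn_eq by simp
    fix c assume "c \<in> homology S p \<and> hmap Xs p sd_approx c = conn Xs p (rel_cls X Xs (n - 1) (tuple_chain Q))"
    then show "c = c0" using uniq conn_eq by simp
  qed

  have ar_eq: "ar scale M n Q = hcls T p (chain_map V.span z0)"
  proof -
    have "ar scale M n Q = hmap T p V.span c0"
      unfolding ar_def X_def[symmetric] Xs_def[symmetric] S_def[symmetric] T_def[symmetric] p_def[symmetric] the_eq ..
    also have "\<dots> = hcls T p (chain_map V.span z0)"
      unfolding c0_def using z0_ch span_map by (rule hmap_hcls)
    finally show ?thesis .
  qed
  define N where "N = [0..<n]"
  have Nne: "N \<noteq> []" and lenN: "length N = n" using np by (auto simp: N_def)
  have zN_ch: "bd (sd_chain N) \<in> chains Sig p"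
  proof -
    have "bd (sd_chain N) = lin sd_chain (bdb N)" using Nne by (rule bd_sd_chain)
    also have "\<dots> \<in> chains Sig p"
    proof (rule chains_lin)
      fix u assume "u \<in> supp (bdb N)"
      then obtain i where i: "i < length N" "u = del i N" using supp_bdb by blast
      have lu: "length u = Suc p" using i np lenN by (simp add: length_del)
      have une: "u \<noteq> []" using lu by auto
      have su: "set u \<subseteq> {0..<n}" using set_del[of i N] i by (auto simp: N_def)
      have "card (set u) < n" using card_set_del[OF i(1)] i lenN by simp
      then have "set u \<noteq> {0..<n}" by auto
      with su have psu: "set u \<subset> {0..<n}" by auto
      show "sd_chain u \<in> chains Sig p"
      proof (rule chainsI)
        fix t assume t: "t \<in> supp (sd_chain u)"
        from supp_sd_chain[OF une t] have h: "length t = length u" "\<forall>Y\<in>set t. Y \<subseteq> set u \<and> Y \<noteq> {}"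
          "\<forall>A\<in>set t. \<forall>B\<in>set t. A \<subseteq> B \<or> B \<subseteq> A" by auto
        have "\<forall>I\<in>set t. I \<noteq> {} \<and> I \<subset> {0..<n}" using h(2) psu by blast
        then have "set t \<in> Sig" using h(1,3) lu by (auto simp: Sig_def Sigma_cplx_def)
        then show "length t = Suc p \<and> set t \<in> Sig" using h(1) lu by simp
      qed simp
    qed simp
    finally show ?thesis .
  qed
  have mod_eq: "modsym scale Q = hcls T p (chain_map V.span z0)"
  proof -
    have "modsym scale Q = hmap T p (\<lambda>I. V.span ((\<lambda>i. Q ! i) ` I)) (zeta n)"
      by (simp add: modsym_def lenQ p_def T_def)
    also have "zeta n = hcls Sig p (bd (sd_chain N))"
      by (simp add: zeta_def Sig_def p_def N_def)
    also have "hmap T p (\<lambda>I. V.span ((\<lambda>i. Q ! i) ` I)) \<dots> =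
        hcls T p (chain_map (\<lambda>I. V.span ((\<lambda>i. Q ! i) ` I)) (bd (sd_chain N)))"
      using zN_ch Sig_map by (rule hmap_hcls)
    also have "chain_map (\<lambda>I. V.span ((\<lambda>i. Q ! i) ` I)) (bd (sd_chain N)) =
        chain_map V.span (chain_map (image (\<lambda>i. Q ! i)) (bd (sd_chain N)))"
      by (simp add: chain_map_comp fin_bd comp_def)
    also have "chain_map (image (\<lambda>i. Q ! i)) (bd (sd_chain N)) = bd (sd_chain (map (\<lambda>i. Q ! i) N))"
      by (simp add: chain_map_bd sd_chain_def sdc_nat)
    also have "map (\<lambda>i. Q ! i) N = Q"
    proof -
      have "map (\<lambda>i. Q ! i) N = map ((!) Q) [0..<length Q]" by (simp add: N_def lenQ)
      also have "\<dots> = Q" by (rule map_nth)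
      finally show ?thesis .
    qed
    finally show ?thesis by (simp add: z0_def)
  qed
  show ?thesis using ar_eq mod_eq by simp
qed

end
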